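(* Consider the one-dimensional setting $D_f = (-a,a)$, $D_c = (-b,-a)\cup(a,b)$, $D = (-L,-b)\cup(b,L)$ with $0<a<b<L$, $\Gamma=\{-L,L\}$, and $k_\varepsilon(x) = k_{\rm per}(x/\varepsilon)$ where $k_{\rm per}$ is a measurable $1$-periodic function with $0<\alpha\le k_{\rm per}\le\beta$, and where $2a$, $b-a$ are integer multiples of $\varepsilon$. For $\overline{k}>0$, let $(\overline{u},u_\varepsilon)$ be the unique minimizer of $$ \frac12\int_D\overline k|\overline u'|^2 + \frac12\int_{D_f}k_\varepsilon|u_\varepsilon'|^2+\frac12\int_{D_c}\Big(\frac12\overline k|\overline u'|^2+\frac12k_\varepsilon|u_\varepsilon'|^2\Big) $$ over $\overline u\in H^1(-L,-a)\cup(a,L))$ with $\overline u(\pm L)=\pm L$, $u_\varepsilon\in H^1(-b,b)$, subject to $\int_{D_c}(\overline u-u_\varepsilon)'\phi'+(\overline u-u_\varepsilon)\phi = 0$ for all $\phi\in H^1(D_c)$. Then $\overline u' = m/\overline k$ on $D$, where $m=m(\overline k)$ is independent of $\varepsilon$ and satisfies $$ |D\cup D_c\cup D_f| = m\Big(\frac{|D|}{\overline k}+\frac{|D_f|}{k^\star}+|D_c|\Big\langle\frac{2}{\overline k+k_{\rm per}}\Big\rangle\Big), $$ with $k^\star = \langle k_{\rm per}^{-1}\rangle^{-1}$. Consequently the function $J_{1D}(\overline k)=\int_D|\overline u'-1|^2$ attains its minimum over $\overline k\in(0,\infty)$ at a unique point $\overline k^{\rm opt}$, characterized as the unique positive solution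 of $$ |D_c\cup D_f| = |D_f|\frac{\overline k^{\rm opt}}{k^\star} + |D_c|\,\overline k^{\rm opt}\Big\langle\frac{2}{\overline k^{\rm opt}+k_{\rm per}}\Big\rangle, $$ and $\overline k^{\rm opt}>k^\star$ whenever $k_{\rm per}$ is not a.e. constant.
   Context: $\langle g\rangle = \int_0^1 g(y)\,dy$ denotes the average over the periodic cell of a $1$-periodic function $g$. $|\cdot|$ denotes one-dimensional Lebesgue measure (total length). $H^1$ of a union of intervals means $H^1$ of the interior of the closure of that union, so $\overline u\in H^1((-L,-a)\cup(a,L))$ with $D\cup D_c=(-L,-a)\cup(a,L)$ and $D_c\cup D_f=(-b,b)$. *)

theory Defs
  imports "HOL-Analysis.Analysis"
begin

definition Df_set :: "real \<Rightarrow> real set" where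
  "Df_set a = {-a<..<a}"

definition Dc_set :: "real \<Rightarrow> real \<Rightarrow> real set" where
  "Dc_set a b = {-b<..<-a} \<union> {a<..<b}"

definition D_set :: "real \<Rightarrow> real \<Rightarrow> real set" where
  "D_set b L = {-L<..<-b} \<union> {b<..<L}"

definition cell_avg :: "(real \<Rightarrow> real) \<Rightarrow> real" where
  "cell_avg g = (LINT y:{0..1}|lebesgue. g y)"

definition kstar :: "(real \<Rightarrow> real) \<Rightarrow> real" where
  "kstar kper = inverse (cell_avg (\<lambda>y. inverse (kper y)))"

text \<open>One-dimensional H^1 on the open interval (p,q): u is (the continuous representative)
  u(x) = u(p) + int_p^x g with weak derivative g in L^2(p,q).\<close>
definition H1_on :: "real \<Rightarrow> real \<Rightarrow> (real \<Rightarrow> real) \<Rightarrow> (real \<Rightarrow> real) \<Rightarrow> bool" where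
  "H1_on p q u g \<longleftrightarrow>
     set_integrable lebesgue {p<..<q} g \<and>
     set_integrable lebesgue {p<..<q} (\<lambda>x. (g x)^2) \<and>
     (\<forall>x\<in>{p..q}. u x = u p + (LINT t:{p..x}|lebesgue. g t))"

definition admissible ::
  "real \<Rightarrow> real \<Rightarrow> real \<Rightarrow> (real \<Rightarrow> real) \<Rightarrow> (real \<Rightarrow> real) \<Rightarrow> (real \<Rightarrow> real) \<Rightarrow> (real \<Rightarrow> real) \<Rightarrow> bool"
  where
  "admissible a b L ubar gbar u g \<longleftrightarrow>
     H1_on (-L) (-a) ubar gbar \<and> H1_on a L ubar gbar \<and>
     ubar (-L) = -L \<and> ubar L = L \<and>
     H1_on (-b) b u g \<and>
     (\<forall>\<phi> \<psi>. H1_on (-b) (-a) \<phi> \<psi> \<and> H1_on a b \<phi> \<psi> \<longrightarrow>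
        (LINT x:Dc_set a b|lebesgue. (gbar x - g x) * \<psi> x + (ubar x - u x) * \<phi> x) = 0)"

definition energy ::
  "real \<Rightarrow> real \<Rightarrow> real \<Rightarrow> (real \<Rightarrow> real) \<Rightarrow> real \<Rightarrow> real \<Rightarrow> (real \<Rightarrow> real) \<Rightarrow> (real \<Rightarrow> real) \<Rightarrow> real"
  where
  "energy a b L kper \<epsilon> kbar gbar g =
     (1/2) * (LINT x:D_set b L|lebesgue. kbar * (gbar x)^2)
   + (1/2) * (LINT x:Df_set a|lebesgue. kper (x / \<epsilon>) * (g x)^2)
   + (1/2) * (LINT x:Dc_set a b|lebesgue.
                 (1/2) * kbar * (gbar x)^2 + (1/2) * kper (x / \<epsilon>) * (g x)^2)"

definition is_minimizer ::
  "real \<Rightarrow> real \<Rightarrow> real \<Rightarrow> (real \<Rightarrow> real) \<Rightarrow> real \<Rightarrow> real \<Rightarrow>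
   (real \<Rightarrow> real) \<Rightarrow> (real \<Rightarrow> real) \<Rightarrow> (real \<Rightarrow> real) \<Rightarrow> (real \<Rightarrow> real) \<Rightarrow> bool"
  where
  "is_minimizer a b L kper \<epsilon> kbar ubar gbar u g \<longleftrightarrow>
     admissible a b L ubar gbar u g \<and>
     (\<forall>ubar' gbar' u' g'. admissible a b L ubar' gbar' u' g' \<longrightarrow>
        energy a b L kper \<epsilon> kbar gbar g \<le> energy a b L kper \<epsilon> kbar gbar' g')"

definition J1D :: "real \<Rightarrow> real \<Rightarrow> real \<Rightarrow> (real \<Rightarrow> real) \<Rightarrow> real \<Rightarrow> real \<Rightarrow> real" where
  "J1D a b L kper \<epsilon> kbar =
     (SOME j. \<exists>ubar gbar u g. is_minimizer a b L kper \<epsilon> kbar ubar gbar u g \<and>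
        j = (LINT x:D_set b L|lebesgue. (gbar x - 1)^2))"

end

theory Submission
  imports Defs
begin


lemma lmeas_Ioo[simp]: "{p<..<q::real} \<in> lmeasurable" and lmeas_Icc[simp]: "{p..q::real} \<in> lmeasurable"
  by (simp_all add: lmeasurable_interval(1) lmeasurable_interval(2)[of p q, simplified box_real])

lemma bm_ai:
  fixes f :: "real \<Rightarrow> real"
  assumes "f \<in> borel_measurable lebesgue" "\<And>x. x \<in> S \<Longrightarrow> \<bar>f x\<bar> \<le> B" "S \<in> lmeasurable"
  shows "f absolutely_integrable_on S"
  unfolding set_integrable_def
proof (rule integrableI_bounded_set_indicator[where B=B])
  show "S \<in> sets lebesgue" using assms(3) by (simp add: fmeasurable_def)
  show "emeasure lebesgue S < \<infinity>" using assms(3) by (metis fmeasurableD2 infinity_ennreal_def less_top)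
qed (use assms in auto)

lemma ai_open_closed:
  fixes g :: "real \<Rightarrow> real"
  shows "(g absolutely_integrable_on {p<..<q}) = (g absolutely_integrable_on {p..q})"
  using absolutely_integrable_on_open_interval[where f=g and a=p and b=q] by (simp add: box_real)

lemma ai_sub:
  fixes g :: "real \<Rightarrow> real"
  assumes "g absolutely_integrable_on {p..q}" "p \<le> x" "y \<le> q"
  shows "g absolutely_integrable_on {x..y}"
  by (rule set_integrable_subset[OF assms(1)]) (use assms in auto)

lemma lint_ioo:
  fixes g :: "real \<Rightarrow> real"
  assumes "g absolutely_integrable_on {p..q}"
  shows "(LINT x:{p<..<q}|lebesgue. g x) = integral {p..q} g"
proof -
  have "g absolutely_integrable_on {p<..<q}" using assms ai_open_closed by blast
  then have "(LINT x:{p<..<q}|lebesgue. g x) = integral {p<..<q} g"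
    by (rule set_lebesgue_integral_eq_integral)
  then show ?thesis by (simp add: integral_open_interval_real)
qed

lemma lint_icc:
  fixes g :: "real \<Rightarrow> real"
  assumes "g absolutely_integrable_on {p..q}"
  shows "(LINT x:{p..q}|lebesgue. g x) = integral {p..q} g"
  using assms by (rule set_lebesgue_integral_eq_integral)

lemma ai_int: "(g::real\<Rightarrow>real) absolutely_integrable_on S \<Longrightarrow> g integrable_on S"
  by (rule set_lebesgue_integral_eq_integral(1))

lemma combine:
  fixes g :: "real \<Rightarrow> real"
  assumes "g absolutely_integrable_on {p..q}" "p \<le> x" "x \<le> q"
  shows "integral {p..x} g + integral {x..q} g = integral {p..q} g"
proof -
  have "g integrable_on {p..q}" using assms(1) by (rule ai_int)
  then show ?thesis using Henstock_Kurzweil_Integration.integral_combine[of p x q g] assms(2,3) by simp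
qed

lemma H1_int:
  assumes "H1_on p q u g" "p \<le> x" "x \<le> y" "y \<le> q"
  shows "g absolutely_integrable_on {x..y}" "(\<lambda>t. (g t)^2) absolutely_integrable_on {x..y}"
    "u y - u x = integral {x..y} g"
proof -
  have h: "set_integrable lebesgue {p<..<q} g" "set_integrable lebesgue {p<..<q} (\<lambda>x. (g x)^2)"
     "\<forall>x\<in>{p..q}. u x = u p + (LINT t:{p..x}|lebesgue. g t)"
    using H1_on_def[THEN iffD1, OF assms(1)] by blast+
  have g: "g absolutely_integrable_on {p..q}" using ai_open_closed[THEN iffD1, OF h(1)] .
  have g2: "(\<lambda>t. (g t)^2) absolutely_integrable_on {p..q}" using ai_open_closed[THEN iffD1, OF h(2)] .
  have xq: "x \<le> q" "p \<le> y" using assms by linarith+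
  show "g absolutely_integrable_on {x..y}" by (rule ai_sub[OF g assms(2) assms(4)])
  show "(\<lambda>t. (g t)^2) absolutely_integrable_on {x..y}" by (rule ai_sub[OF g2 assms(2) assms(4)])
  have gy: "g absolutely_integrable_on {p..y}" by (rule ai_sub[OF g order.refl assms(4)])
  have gx: "g absolutely_integrable_on {p..x}" by (rule ai_sub[OF g order.refl xq(1)])
  have "y \<in> {p..q}" using xq assms(4) by simp
  then have "u y = u p + (LINT t:{p..y}|lebesgue. g t)" using h(3) by blast
  then have uy: "u y = u p + integral {p..y} g" unfolding lint_icc[OF gy] .
  have "x \<in> {p..q}" using xq assms(2) by simp
  then have "u x = u p + (LINT t:{p..x}|lebesgue. g t)" using h(3) by blast
  then have ux: "u x = u p + integral {p..x} g" unfolding lint_icc[OF gx] .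
  have "integral {p..x} g + integral {x..y} g = integral {p..y} g"
    by (rule combine[OF gy assms(2) assms(3)])
  then show "u y - u x = integral {x..y} g" using ux uy by linarith
qed

lemma H1_indef:
  fixes f :: "real \<Rightarrow> real"
  assumes f: "f absolutely_integrable_on {p0..q}" and f2: "(\<lambda>t. (f t)^2) absolutely_integrable_on {p0..q}"
    and pp: "p0 \<le> p" "p \<le> q"
  shows "H1_on p q (\<lambda>x. c + integral {p0..x} f) f"
  unfolding H1_on_def
proof (intro conjI ballI)
  show "set_integrable lebesgue {p<..<q} f" using ai_open_closed[THEN iffD2, OF ai_sub[OF f pp(1) order.refl]] .
  show "set_integrable lebesgue {p<..<q} (\<lambda>x. (f x)^2)" using ai_open_closed[THEN iffD2, OF ai_sub[OF f2 pp(1) order.refl]] .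
  fix x assume x: "x \<in> {p..q}"
  have x1: "p \<le> x" "x \<le> q" "p0 \<le> x" using x pp by auto
  have fx: "f absolutely_integrable_on {p0..x}" by (rule ai_sub[OF f order.refl x1(2)])
  have "integral {p0..p} f + integral {p..x} f = integral {p0..x} f"
    by (rule combine[OF fx pp(1) x1(1)])
  moreover have "(LINT t:{p..x}|lebesgue. f t) = integral {p..x} f"
    by (rule lint_icc[OF ai_sub[OF f pp(1) x1(2)]])
  ultimately show "c + integral {p0..x} f = c + integral {p0..p} f + (LINT t:{p..x}|lebesgue. f t)"
    by simp
qed

lemma per_int_shift:
  fixes f :: "real \<Rightarrow> real"
  assumes per: "\<forall>x. f (x + 1) = f x"
  shows "f (x + real_of_int k) = f x"
proof -
  have nat: "f (y + real n) = f y" for y n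
  proof (induction n)
    case 0 show ?case by simp
  next
    case (Suc n)
    have "f (y + real (Suc n)) = f ((y + real n) + 1)" by (simp add: algebra_simps)
    also have "\<dots> = f (y + real n)" using per by blast
    finally show ?case using Suc by simp
  qed
  show ?thesis
  proof (cases "k \<ge> 0")
    case True
    then show ?thesis using nat[of x "nat k"] by simp
  next
    case False
    have "f (x + real_of_int k + real (nat (-k))) = f (x + real_of_int k)" by (rule nat)
    then show ?thesis using False by simp
  qed
qed

lemma per_int_1:
  fixes f :: "real \<Rightarrow> real"
  assumes per: "\<forall>x. f (x + 1) = f x" and ai: "\<And>p q. f absolutely_integrable_on {p..q}"
  shows "integral {s..s+1} f = integral {0..1} f"
proof -
  define k where "k = floor s"
  define r where "r = s - k"
  have r: "0 \<le> r" "r < 1" unfolding r_def k_def by linarith+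
  have sh: "(\<lambda>x. f (x + c)) = f" if "c = real_of_int j" for c j
    using per_int_shift[OF per] that by auto
  have "integral {s..s+1} f = integral {s..k+1} f + integral {k+1..s+1} f"
    using combine[OF ai, of s "k+1" "s+1"] r unfolding r_def by auto
  also have "integral {s..k+1} f = integral {r..1} f"
    using integral_shift_real_ivl[of s k "k+1" f] sh[of "real_of_int k" k] unfolding r_def by simp
  also have "integral {k+1..s+1} f = integral {0..r} f"
    using integral_shift_real_ivl[of "k+1" "k+1" "s+1" f] sh[of "real_of_int k + 1" "k+1"] unfolding r_def
    by (simp add: algebra_simps)
  also have "integral {r..1} f + integral {0..r} f = integral {0..1} f"
    using combine[OF ai, of 0 r 1] r by simp
  finally show ?thesis .
qed

lemma per_int_n:
  fixes f :: "real \<Rightarrow> real"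
  assumes per: "\<forall>x. f (x + 1) = f x" and ai: "\<And>p q. f absolutely_integrable_on {p..q}"
  shows "integral {s..s + real n} f = real n * integral {0..1} f"
proof (induction n)
  case 0 then show ?case by simp
next
  case (Suc n)
  have e: "s + real (Suc n) = s + real n + 1" by simp
  have "integral {s..s + real (Suc n)} f = integral {s..s + real n} f + integral {s + real n..s + real n + 1} f"
    unfolding e using combine[OF ai, of s "s + real n" "s + real n + 1"] by simp
  also have "integral {s + real n..s + real n + 1} f = integral {0..1} f"
    by (rule per_int_1[OF per ai])
  finally show ?case using Suc by (simp add: algebra_simps)
qed

lemma per_int_eps:
  fixes f :: "real \<Rightarrow> real"
  assumes per: "\<forall>x. f (x + 1) = f x" and ai: "\<And>p q. f absolutely_integrable_on {p..q}"
    and e: "\<epsilon> > 0"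
  shows "integral {p..p + real n * \<epsilon>} (\<lambda>x. f (x / \<epsilon>)) = real n * \<epsilon> * integral {0..1} f"
proof -
  have "integral ((\<lambda>x. x / (1/\<epsilon>)) ` {p/\<epsilon>..p/\<epsilon> + real n}) (\<lambda>x. f ((1/\<epsilon>) * x))
        = (1 / \<bar>1/\<epsilon>\<bar>) *\<^sub>R integral {p/\<epsilon>..p/\<epsilon> + real n} f"
    by (rule integral_stretch_real) (use e in auto)
  moreover have "(\<lambda>x. x / (1/\<epsilon>)) ` {p/\<epsilon>..p/\<epsilon> + real n} = {p..p + real n * \<epsilon>}"
  proof -
    have 1: "(\<lambda>x. x / (1/\<epsilon>)) = (*) \<epsilon>" by (auto simp: fun_eq_iff)
    have 2: "\<epsilon> * (p/\<epsilon>) = p" "\<epsilon> * (p/\<epsilon> + real n) = p + real n * \<epsilon>" using e by (auto simp: field_simps)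
    show ?thesis unfolding 1 image_mult_atLeastAtMost[OF e] 2 by (rule refl)
  qed
  moreover have "(\<lambda>x. f ((1/\<epsilon>) * x)) = (\<lambda>x. f (x / \<epsilon>))" by (simp add: fun_eq_iff)
  ultimately show ?thesis using per_int_n[OF per ai, of "p/\<epsilon>" n] e by simp
qed

lemma per_lint_eps:
  fixes f :: "real \<Rightarrow> real"
  assumes per: "\<forall>x. f (x + 1) = f x" and meas: "f \<in> borel_measurable lebesgue"
    and bnd: "\<And>x. \<bar>f x\<bar> \<le> B" and e: "\<epsilon> > 0" and q: "q = p + real n * \<epsilon>"
  shows "(LINT x:{p<..<q}|lebesgue. f (x / \<epsilon>)) = (q - p) * cell_avg f"
proof -
  have ai: "\<And>p q. f absolutely_integrable_on {p..q}" by (rule bm_ai[OF meas bnd]) auto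
  have m2: "(\<lambda>x. f (x / \<epsilon>)) \<in> borel_measurable lebesgue"
    using borel_measurable_affine[OF meas, of "1/\<epsilon>" 0] e by (simp add: divide_inverse mult.commute)
  have "(\<lambda>x. f (x / \<epsilon>)) absolutely_integrable_on {p..q}" by (rule bm_ai[OF m2 bnd]) auto
  then have "(LINT x:{p<..<q}|lebesgue. f (x / \<epsilon>)) = integral {p..q} (\<lambda>x. f (x / \<epsilon>))"
    by (rule lint_ioo)
  also have "\<dots> = (q - p) * integral {0..1} f" using per_int_eps[OF per ai e, of p n] q by simp
  also have "integral {0..1} f = cell_avg f" unfolding cell_avg_def using lint_icc[OF ai] by simp
  finally show ?thesis .
qed


lemma ai_sq_diff:
  fixes f g :: "real \<Rightarrow> real"
  assumes "f absolutely_integrable_on {p..q}" "g absolutely_integrable_on {p..q}"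
    "(\<lambda>x. (f x)^2) absolutely_integrable_on {p..q}" "(\<lambda>x. (g x)^2) absolutely_integrable_on {p..q}"
  shows "(\<lambda>x. (f x - g x)^2) absolutely_integrable_on {p..q}"
proof (rule measurable_bounded_by_integrable_imp_absolutely_integrable)
  have d: "(\<lambda>x. f x - g x) absolutely_integrable_on {p..q}" using assms(1,2) by (rule set_integral_diff(1))
  have S: "{p..q} \<in> sets lebesgue" by simp
  have "(\<lambda>x. f x - g x) \<in> borel_measurable (lebesgue_on {p..q})"
    using absolutely_integrable_measurable[OF S, THEN iffD1, OF d] by (rule conjunct1)
  then show "(\<lambda>x. (f x - g x)^2) \<in> borel_measurable (lebesgue_on {p..q})" by (rule borel_measurable_power)
  show "{p..q} \<in> sets lebesgue" by (rule S)
  have "(\<lambda>x. 2 * (f x)^2) absolutely_integrable_on {p..q}" by (rule set_integrable_mult_right) (rule assms(3))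
  moreover have "(\<lambda>x. 2 * (g x)^2) absolutely_integrable_on {p..q}" by (rule set_integrable_mult_right) (rule assms(4))
  ultimately have "(\<lambda>x. 2 * (f x)^2 + 2 * (g x)^2) absolutely_integrable_on {p..q}" by (rule set_integral_add(1))
  then show "(\<lambda>x. 2 * (f x)^2 + 2 * (g x)^2) integrable_on {p..q}" by (rule ai_int)
  fix x
  have e: "(f x - g x)^2 + (f x + g x)^2 = 2 * (f x)^2 + 2 * (g x)^2" by (simp add: power2_eq_square algebra_simps)
  have "0 \<le> (f x + g x)^2" by (rule zero_le_power2)
  then have "(f x - g x)^2 \<le> 2 * (f x)^2 + 2 * (g x)^2" using e by linarith
  then show "norm ((f x - g x)^2) \<le> 2 * (f x)^2 + 2 * (g x)^2" by simp
qed

lemma H1_sub: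
  assumes "H1_on p q u g" "p \<le> p'" "p' \<le> q'" "q' \<le> q"
  shows "g absolutely_integrable_on {p'..q'}" "(\<lambda>t. (g t)^2) absolutely_integrable_on {p'..q'}"
    "\<forall>x\<in>{p'..q'}. u x - u p' = integral {p'..x} g"
proof -
  show "g absolutely_integrable_on {p'..q'}" "(\<lambda>t. (g t)^2) absolutely_integrable_on {p'..q'}"
    by (rule H1_int(1)[OF assms], rule H1_int(2)[OF assms])
  show "\<forall>x\<in>{p'..q'}. u x - u p' = integral {p'..x} g"
  proof
    fix x assume "x \<in> {p'..q'}"
    then have "p' \<le> x" "x \<le> q" using assms by auto
    then show "u x - u p' = integral {p'..x} g" using H1_int(3)[OF assms(1,2)] by blast
  qed
qed

lemma piece:
  fixes gb g ub u :: "real \<Rightarrow> real"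
  assumes pq: "p \<le> q"
    and a1: "gb absolutely_integrable_on {p..q}" and a2: "(\<lambda>t. (gb t)^2) absolutely_integrable_on {p..q}"
    and a3: "g absolutely_integrable_on {p..q}" and a4: "(\<lambda>t. (g t)^2) absolutely_integrable_on {p..q}"
    and r1: "\<forall>x\<in>{p..q}. ub x - ub p = integral {p..x} gb"
    and r2: "\<forall>x\<in>{p..q}. u x - u p = integral {p..x} g"
  shows "(\<lambda>x. gb x - g x) absolutely_integrable_on {p..q}"
    "(\<lambda>x. (gb x - g x)^2) absolutely_integrable_on {p..q}"
    "\<forall>x\<in>{p..q}. ub x - u x = (ub p - u p) + integral {p..x} (\<lambda>x. gb x - g x)"
    "(\<lambda>x. (ub x - u x)^2) absolutely_integrable_on {p..q}"
    "H1_on p q (\<lambda>x. ub x - u x) (\<lambda>x. gb x - g x)"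
proof -
  show d: "(\<lambda>x. gb x - g x) absolutely_integrable_on {p..q}" using a1 a3 by (rule set_integral_diff(1))
  show d2: "(\<lambda>x. (gb x - g x)^2) absolutely_integrable_on {p..q}" by (rule ai_sq_diff[OF a1 a3 a2 a4])
  have rep: "ub x - u x = (ub p - u p) + integral {p..x} (\<lambda>x. gb x - g x)" if x: "x \<in> {p..q}" for x
  proof -
    have xx: "p \<le> p" "x \<le> q" using x by auto
    have "gb integrable_on {p..x}" "g integrable_on {p..x}"
      using ai_int[OF ai_sub[OF a1 xx]] ai_int[OF ai_sub[OF a3 xx]] by (simp_all only: xx)
    then have "integral {p..x} (\<lambda>x. gb x - g x) = integral {p..x} gb - integral {p..x} g"
      by (rule Henstock_Kurzweil_Integration.integral_diff)
    moreover have "ub x - ub p = integral {p..x} gb" "u x - u p = integral {p..x} g" using bspec[OF r1 x] bspec[OF r2 x] by (simp_all only:)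
    ultimately show ?thesis by linarith
  qed
  then show "\<forall>x\<in>{p..q}. ub x - u x = (ub p - u p) + integral {p..x} (\<lambda>x. gb x - g x)" by blast
  have "continuous_on {p..q} (\<lambda>x. (ub p - u p) + integral {p..x} (\<lambda>x. gb x - g x))"
    by (rule continuous_on_add[OF continuous_on_const indefinite_integral_continuous_1[OF ai_int[OF d]]])
  then have "continuous_on {p..q} (\<lambda>x. ub x - u x)"
  proof (rule continuous_on_cong[THEN iffD1, rotated 2])
    show "ub p - u p + integral {p..x} (\<lambda>x. gb x - g x) = ub x - u x" if x: "x \<in> {p..q}" for x
      using rep[OF x] by linarith
  qed (rule refl)
  then have "continuous_on {p..q} (\<lambda>x. (ub x - u x)^2)" by (rule continuous_on_power)
  then show "(\<lambda>x. (ub x - u x)^2) absolutely_integrable_on {p..q}" by (rule absolutely_integrable_continuous_real)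
  show "H1_on p q (\<lambda>x. ub x - u x) (\<lambda>x. gb x - g x)"
    unfolding H1_on_def
  proof (intro conjI ballI)
    show "set_integrable lebesgue {p<..<q} (\<lambda>x. gb x - g x)" using ai_open_closed[THEN iffD2, OF d] .
    show "set_integrable lebesgue {p<..<q} (\<lambda>x. (gb x - g x)^2)" using ai_open_closed[THEN iffD2, OF d2] .
    fix x assume x: "x \<in> {p..q}"
    have xx: "p \<le> p" "x \<le> q" using x by auto
    have "(LINT t:{p..x}|lebesgue. gb t - g t) = integral {p..x} (\<lambda>x. gb x - g x)"
      by (rule lint_icc[OF ai_sub[OF d xx]])
    then show "ub x - u x = ub p - u p + (LINT t:{p..x}|lebesgue. gb t - g t)" using rep[OF x] by linarith
  qed
qed

lemma zero_const:
  fixes \<phi> \<psi> :: "real \<Rightarrow> real"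
  assumes pq: "p < q" and psi: "\<psi> absolutely_integrable_on {p..q}"
    and rep: "\<forall>x\<in>{p..q}. \<phi> x = \<phi> p + integral {p..x} \<psi>"
    and ae: "AE x in lebesgue. x \<in> {p<..<q} \<longrightarrow> \<psi> x = 0 \<and> \<phi> x = 0"
  shows "\<forall>x\<in>{p..q}. \<phi> x = 0"
proof -
  have int0: "integral {p..x} \<psi> = 0" if x: "x \<in> {p..q}" for x
  proof -
    have xx: "p \<le> p" "x \<le> q" using x by auto
    have "\<psi> absolutely_integrable_on {p..x}" by (rule ai_sub[OF psi xx])
    then have "integral {p..x} \<psi> = (LINT t:{p<..<x}|lebesgue. \<psi> t)" by (rule lint_ioo[symmetric])
    also have "\<dots> = 0"
    proof -
      have "AE t in lebesgue. indicator {p<..<x} t *\<^sub>R \<psi> t = 0"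
        using ae by eventually_elim (use xx in \<open>auto simp: indicator_def\<close>)
      then show ?thesis unfolding set_lebesgue_integral_def by (rule integral_eq_zero_AE)
    qed
    finally show ?thesis .
  qed
  have const: "\<forall>x\<in>{p..q}. \<phi> x = \<phi> p"
  proof
    fix x assume x: "x \<in> {p..q}"
    show "\<phi> x = \<phi> p" using bspec[OF rep x] int0[OF x] by linarith
  qed
  have "\<phi> p = 0"
  proof (rule ccontr)
    assume ne: "\<phi> p \<noteq> 0"
    have nz: "x \<in> {p<..<q} \<Longrightarrow> \<phi> x \<noteq> 0" for x
    proof -
      assume "x \<in> {p<..<q}"
      then have "x \<in> {p..q}" by auto
      then have "\<phi> x = \<phi> p" using const by blast
      then show "\<phi> x \<noteq> 0" using ne by simp
    qed
    have aeN: "AE x in lebesgue. x \<notin> {p<..<q}" using ae by eventually_elim (use nz in blast)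
    have N: "{p<..<q} \<in> null_sets lebesgue"
      by (rule AE_iff_null_sets[THEN iffD2]) (simp, rule aeN)
    have "measure lebesgue {p<..<q} = 0" unfolding measure_def null_setsD1[OF N] by simp
    moreover have "measure lebesgue {p<..<q} = q - p" using pq by simp
    ultimately show False using pq by simp
  qed
  then show ?thesis using const by (metis)
qed

lemma nonneg0:
  fixes F :: "real \<Rightarrow> real"
  assumes "set_integrable lebesgue A F" "\<forall>x. 0 \<le> F x" "(LINT x:A|lebesgue. F x) = 0"
  shows "AE x in lebesgue. x \<in> A \<longrightarrow> F x = 0"
proof -
  have "AE x in lebesgue. indicator A x *\<^sub>R F x = 0"
    using integral_nonneg_eq_0_iff_AE[of lebesgue "\<lambda>x. indicator A x *\<^sub>R F x"] assms
    unfolding set_integrable_def set_lebesgue_integral_def by (auto simp: indicator_def)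
  then show ?thesis by eventually_elim (auto simp: indicator_def)
qed

lemma lint_union2:
  fixes f :: "real \<Rightarrow> real"
  assumes "f absolutely_integrable_on {p..q}" "f absolutely_integrable_on {r..s}" "q \<le> r"
  shows "(LINT x:{p<..<q} \<union> {r<..<s}|lebesgue. f x) = integral {p..q} f + integral {r..s} f"
    "set_integrable lebesgue ({p<..<q} \<union> {r<..<s}) f"
proof -
  have 1: "set_integrable lebesgue {p<..<q} f" "set_integrable lebesgue {r<..<s} f"
    using ai_open_closed[THEN iffD2, OF assms(1)] ai_open_closed[THEN iffD2, OF assms(2)] by auto
  have "(LINT x:{p<..<q} \<union> {r<..<s}|lebesgue. f x) = (LINT x:{p<..<q}|lebesgue. f x) + (LINT x:{r<..<s}|lebesgue. f x)"
    by (rule set_integral_Un) (use 1 assms(3) in auto)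
  then show "(LINT x:{p<..<q} \<union> {r<..<s}|lebesgue. f x) = integral {p..q} f + integral {r..s} f"
    using lint_ioo[OF assms(1)] lint_ioo[OF assms(2)] by simp
  show "set_integrable lebesgue ({p<..<q} \<union> {r<..<s}) f" using 1 by (rule set_integrable_Un) auto
qed

lemma adm_facts:
  assumes geom: "0 < a" "a < b" "b < L" and adm: "admissible a b L ubar gbar u g"
  shows "AE x in lebesgue. x \<in> Dc_set a b \<longrightarrow> gbar x = g x" "ubar (-b) = u (-b)" "ubar b = u b"
proof -
  from adm have H1: "H1_on (-L) (-a) ubar gbar" "H1_on a L ubar gbar" "H1_on (-b) b u g"
    and con: "\<forall>\<phi> \<psi>. H1_on (-b) (-a) \<phi> \<psi> \<and> H1_on a b \<phi> \<psi> \<longrightarrow>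
        (LINT x:Dc_set a b|lebesgue. (gbar x - g x) * \<psi> x + (ubar x - u x) * \<phi> x) = 0"
    unfolding admissible_def by auto
  have P1s: "(\<lambda>x. gbar x - g x) absolutely_integrable_on {-b..-a}"
    "(\<lambda>x. (gbar x - g x)^2) absolutely_integrable_on {-b..-a}"
    "\<forall>x\<in>{-b..-a}. ubar x - u x = (ubar (-b) - u (-b)) + integral {-b..x} (\<lambda>x. gbar x - g x)"
    "(\<lambda>x. (ubar x - u x)^2) absolutely_integrable_on {-b..-a}"
    "H1_on (-b) (-a) (\<lambda>x. ubar x - u x) (\<lambda>x. gbar x - g x)"
  proof -
    have "-L \<le> -b" "-b \<le> -a" "-a \<le> -a" "-b \<le> -b" "-a \<le> b" using geom by auto
    note A = H1_sub[OF H1(1) this(1,2,3)] and B = H1_sub[OF H1(3) this(4,2,5)]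
    show "(\<lambda>x. gbar x - g x) absolutely_integrable_on {-b..-a}"
      "(\<lambda>x. (gbar x - g x)^2) absolutely_integrable_on {-b..-a}"
      "\<forall>x\<in>{-b..-a}. ubar x - u x = (ubar (-b) - u (-b)) + integral {-b..x} (\<lambda>x. gbar x - g x)"
      "(\<lambda>x. (ubar x - u x)^2) absolutely_integrable_on {-b..-a}"
      "H1_on (-b) (-a) (\<lambda>x. ubar x - u x) (\<lambda>x. gbar x - g x)"
      using piece[where p="-b" and q="-a" and gb=gbar and g=g and ub=ubar and u=u, OF \<open>-b \<le> -a\<close> A(1,2) B(1,2) A(3) B(3)]
      by blast+
  qed
  have P2s: "(\<lambda>x. gbar x - g x) absolutely_integrable_on {a..b}"
    "(\<lambda>x. (gbar x - g x)^2) absolutely_integrable_on {a..b}"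
    "\<forall>x\<in>{a..b}. ubar x - u x = (ubar a - u a) + integral {a..x} (\<lambda>x. gbar x - g x)"
    "(\<lambda>x. (ubar x - u x)^2) absolutely_integrable_on {a..b}"
    "H1_on a b (\<lambda>x. ubar x - u x) (\<lambda>x. gbar x - g x)"
  proof -
    have "a \<le> a" "a \<le> b" "b \<le> L" "-b \<le> a" "b \<le> b" using geom by auto
    note A = H1_sub[OF H1(2) this(1,2,3)] and B = H1_sub[OF H1(3) this(4,2,5)]
    show "(\<lambda>x. gbar x - g x) absolutely_integrable_on {a..b}"
      "(\<lambda>x. (gbar x - g x)^2) absolutely_integrable_on {a..b}"
      "\<forall>x\<in>{a..b}. ubar x - u x = (ubar a - u a) + integral {a..x} (\<lambda>x. gbar x - g x)"
      "(\<lambda>x. (ubar x - u x)^2) absolutely_integrable_on {a..b}"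
      "H1_on a b (\<lambda>x. ubar x - u x) (\<lambda>x. gbar x - g x)"
      using piece[where p="a" and q="b" and gb=gbar and g=g and ub=ubar and u=u, OF \<open>a \<le> b\<close> A(1,2) B(1,2) A(3) B(3)]
      by blast+
  qed
  define F where "F x = (gbar x - g x)^2 + (ubar x - u x)^2" for x
  have "(LINT x:Dc_set a b|lebesgue. (gbar x - g x) * (gbar x - g x) + (ubar x - u x) * (ubar x - u x)) = 0"
    using con P1s(5) P2s(5) by blast
  then have F0: "(LINT x:Dc_set a b|lebesgue. F x) = 0" unfolding F_def by (simp add: power2_eq_square)
  have Fai1: "F absolutely_integrable_on {-b..-a}" "F absolutely_integrable_on {a..b}"
    unfolding F_def using P1s(2,4) P2s(2,4) by (auto intro: set_integral_add(1))
  have "set_integrable lebesgue ({-b<..<-a} \<union> {a<..<b}) F"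
    using lint_union2(2)[OF Fai1] geom by auto
  then have "AE x in lebesgue. x \<in> Dc_set a b \<longrightarrow> F x = 0"
    using nonneg0[of "Dc_set a b" F] F0 unfolding Dc_set_def F_def by auto
  then have ae: "AE x in lebesgue. x \<in> Dc_set a b \<longrightarrow> gbar x - g x = 0 \<and> ubar x - u x = 0"
    by eventually_elim (auto simp: F_def)
  then show "AE x in lebesgue. x \<in> Dc_set a b \<longrightarrow> gbar x = g x" by eventually_elim auto
  have ae1: "AE x in lebesgue. x \<in> {-b<..<-a} \<longrightarrow> gbar x - g x = 0 \<and> ubar x - u x = 0"
    using ae by eventually_elim (auto simp: Dc_set_def)
  have ae2: "AE x in lebesgue. x \<in> {a<..<b} \<longrightarrow> gbar x - g x = 0 \<and> ubar x - u x = 0"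
    using ae by eventually_elim (auto simp: Dc_set_def)
  have "\<forall>x\<in>{-b..-a}. ubar x - u x = 0"
    by (rule zero_const[where \<phi>="\<lambda>x. ubar x - u x", OF _ P1s(1) P1s(3) ae1]) (use geom in auto)
  then show "ubar (-b) = u (-b)" using geom by auto
  have "\<forall>x\<in>{a..b}. ubar x - u x = 0"
    by (rule zero_const[where \<phi>="\<lambda>x. ubar x - u x", OF _ P2s(1) P2s(3) ae2]) (use geom in auto)
  then show "ubar b = u b" using geom by auto
qed

lemma T_total:
  assumes geom: "0 < a" "a < b" "b < L" and adm: "admissible a b L ubar gbar u g"
  shows "(LINT x:D_set b L|lebesgue. gbar x) + (LINT x:Df_set a|lebesgue. g x) + (LINT x:Dc_set a b|lebesgue. g x) = 2 * L"
proof -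
  from adm have H1: "H1_on (-L) (-a) ubar gbar" "H1_on a L ubar gbar" "H1_on (-b) b u g"
    and bc: "ubar (-L) = -L" "ubar L = L"
    unfolding admissible_def by auto
  have e1: "(LINT x:D_set b L|lebesgue. gbar x) = integral {-L..-b} gbar + integral {b..L} gbar"
    unfolding D_set_def by (rule lint_union2(1)) (use H1_int(1)[OF H1(1), of "-L" "-b"] H1_int(1)[OF H1(2), of b L] geom in auto)
  have e2: "(LINT x:Dc_set a b|lebesgue. g x) = integral {-b..-a} g + integral {a..b} g"
    unfolding Dc_set_def by (rule lint_union2(1)) (use H1_int(1)[OF H1(3), of "-b" "-a"] H1_int(1)[OF H1(3), of a b] geom in auto)
  have e3: "(LINT x:Df_set a|lebesgue. g x) = integral {-a..a} g"
    unfolding Df_set_def by (rule lint_ioo) (use H1_int(1)[OF H1(3), of "-a" a] geom in auto)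
  have v: "ubar (-b) - ubar (-L) = integral {-L..-b} gbar" "ubar L - ubar b = integral {b..L} gbar"
    "u (-a) - u (-b) = integral {-b..-a} g" "u b - u a = integral {a..b} g" "u a - u (-a) = integral {-a..a} g"
    using H1_int(3)[OF H1(1), of "-L" "-b"] H1_int(3)[OF H1(2), of b L]
      H1_int(3)[OF H1(3), of "-b" "-a"] H1_int(3)[OF H1(3), of a b] H1_int(3)[OF H1(3), of "-a" a] geom by auto
  show ?thesis using e1 e2 e3 v bc adm_facts(2,3)[OF geom adm] by simp
qed


lemma lint_nonneg:
  fixes f :: "'a \<Rightarrow> real"
  assumes "\<And>x. x \<in> A \<Longrightarrow> 0 \<le> f x"
  shows "0 \<le> (LINT x:A|M. f x)"
  unfolding set_lebesgue_integral_def
  by (rule Bochner_Integration.integral_nonneg) (use assms in \<open>auto simp: indicator_def\<close>)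

lemma lint_cong_AE:
  fixes f g :: "real \<Rightarrow> real"
  assumes "set_integrable lebesgue X f" "set_integrable lebesgue X g"
    and "AE x in lebesgue. x \<in> X \<longrightarrow> f x = g x"
  shows "(LINT x:X|lebesgue. f x) = (LINT x:X|lebesgue. g x)"
  unfolding set_lebesgue_integral_def
proof (rule integral_cong_AE)
  show "(\<lambda>x. indicator X x *\<^sub>R f x) \<in> borel_measurable lebesgue"
    using assms(1) unfolding set_integrable_def by (rule borel_measurable_integrable)
  show "(\<lambda>x. indicator X x *\<^sub>R g x) \<in> borel_measurable lebesgue"
    using assms(2) unfolding set_integrable_def by (rule borel_measurable_integrable)
  show "AE x in lebesgue. indicator X x *\<^sub>R f x = indicator X x *\<^sub>R g x"
    using assms(3) by eventually_elim (simp add: indicator_def)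
qed

lemma quad_int:
  fixes c y :: "real \<Rightarrow> real"
  assumes i1: "set_integrable lebesgue X (\<lambda>x. c x * (y x)^2)" and i2: "set_integrable lebesgue X y"
    and i3: "set_integrable lebesgue X (\<lambda>x. 1 / c x)" and pos: "\<And>x. x \<in> X \<Longrightarrow> c x > 0"
    and X: "X \<in> sets lebesgue"
  shows "(LINT x:X|lebesgue. c x * (y x - m / c x)^2)
      = (LINT x:X|lebesgue. c x * (y x)^2) - 2 * m * (LINT x:X|lebesgue. y x) + m^2 * (LINT x:X|lebesgue. 1 / c x)"
    "set_integrable lebesgue X (\<lambda>x. c x * (y x - m / c x)^2)"
proof -
  have pt: "c x * (y x - m / c x)^2 = (c x * (y x)^2 - (2 * m) * y x) + m^2 * (1 / c x)" if "x \<in> X" for x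
  proof -
    have "c x \<noteq> 0" using pos[OF that] by simp
    then show ?thesis by (simp add: power2_eq_square field_simps)
  qed
  have j1: "set_integrable lebesgue X (\<lambda>x. (2 * m) * y x)" using i2 by (rule set_integrable_mult_right)
  have j2: "set_integrable lebesgue X (\<lambda>x. m^2 * (1 / c x))" using i3 by (rule set_integrable_mult_right)
  have j3: "set_integrable lebesgue X (\<lambda>x. c x * (y x)^2 - (2 * m) * y x)" using i1 j1 by (rule set_integral_diff(1))
  have j4: "set_integrable lebesgue X (\<lambda>x. (c x * (y x)^2 - (2 * m) * y x) + m^2 * (1 / c x))" using j3 j2 by (rule set_integral_add(1))
  have "(LINT x:X|lebesgue. c x * (y x - m / c x)^2) = (LINT x:X|lebesgue. (c x * (y x)^2 - (2 * m) * y x) + m^2 * (1 / c x))"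
    using X pt by (intro set_lebesgue_integral_cong) auto
  also have "\<dots> = (LINT x:X|lebesgue. c x * (y x)^2 - (2 * m) * y x) + (LINT x:X|lebesgue. m^2 * (1 / c x))"
    using j3 j2 by (rule set_integral_add(2))
  also have "(LINT x:X|lebesgue. c x * (y x)^2 - (2 * m) * y x) = (LINT x:X|lebesgue. c x * (y x)^2) - (LINT x:X|lebesgue. (2 * m) * y x)"
    using i1 j1 by (rule set_integral_diff(2))
  also have "(LINT x:X|lebesgue. (2 * m) * y x) = 2 * m * (LINT x:X|lebesgue. y x)" by (rule set_integral_mult_right)
  also have "(LINT x:X|lebesgue. m^2 * (1 / c x)) = m^2 * (LINT x:X|lebesgue. 1 / c x)" by (rule set_integral_mult_right)
  finally show "(LINT x:X|lebesgue. c x * (y x - m / c x)^2)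
      = (LINT x:X|lebesgue. c x * (y x)^2) - 2 * m * (LINT x:X|lebesgue. y x) + m^2 * (LINT x:X|lebesgue. 1 / c x)" .
  show "set_integrable lebesgue X (\<lambda>x. c x * (y x - m / c x)^2)"
  proof (rule set_integrable_cong[THEN iffD2, OF refl refl _ j4])
    show "\<And>x. x \<in> X \<Longrightarrow> c x * (y x - m / c x)^2 = (c x * (y x)^2 - (2 * m) * y x) + m^2 * (1 / c x)"
      by (rule pt)
  qed
qed

lemma split_LL:
  fixes f :: "real \<Rightarrow> real"
  assumes geom: "0 < a" "a < b" "b < L" and f: "f absolutely_integrable_on {-L..L}"
  shows "integral {-L..L} f = (LINT x:D_set b L|lebesgue. f x) + (LINT x:Df_set a|lebesgue. f x) + (LINT x:Dc_set a b|lebesgue. f x)"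
proof -
  have le: "-L \<le> -L" "-L \<le> -b" "-b \<le> -a" "-a \<le> a" "a \<le> b" "b \<le> L" "L \<le> L" "-b \<le> L" "-a \<le> L" "a \<le> L" using geom by auto
  have i: "f absolutely_integrable_on {-L..-b}" "f absolutely_integrable_on {b..L}"
     "f absolutely_integrable_on {-b..-a}" "f absolutely_integrable_on {a..b}" "f absolutely_integrable_on {-a..a}"
     "f absolutely_integrable_on {-b..L}" "f absolutely_integrable_on {-a..L}" "f absolutely_integrable_on {a..L}"
    using ai_sub[OF f] le by (metis order_trans)+
  have e1: "(LINT x:D_set b L|lebesgue. f x) = integral {-L..-b} f + integral {b..L} f"
    unfolding D_set_def by (rule lint_union2(1)[OF i(1,2)]) (use geom in linarith)
  have e2: "(LINT x:Dc_set a b|lebesgue. f x) = integral {-b..-a} f + integral {a..b} f"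
    unfolding Dc_set_def by (rule lint_union2(1)[OF i(3,4)]) (use geom in linarith)
  have e3: "(LINT x:Df_set a|lebesgue. f x) = integral {-a..a} f"
    unfolding Df_set_def by (rule lint_ioo[OF i(5)])
  have c1: "integral {-L..-b} f + integral {-b..L} f = integral {-L..L} f" by (rule combine[OF f le(2) le(8)])
  have c2: "integral {-b..-a} f + integral {-a..L} f = integral {-b..L} f" by (rule combine[OF i(6) le(3) le(9)])
  have c3: "integral {-a..a} f + integral {a..L} f = integral {-a..L} f" by (rule combine[OF i(7) le(4) le(10)])
  have c4: "integral {a..b} f + integral {b..L} f = integral {a..L} f" by (rule combine[OF i(8) le(5) le(6)])
  show ?thesis using e1 e2 e3 c1 c2 c3 c4 by linarith
qed

lemma meas_facts:
  assumes geom: "0 < a" "a < b" "b < L"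
  shows "measure lebesgue (D_set b L) = 2 * (L - b)" "measure lebesgue (Df_set a) = 2 * a"
    "measure lebesgue (Dc_set a b) = 2 * (b - a)"
    "measure lebesgue (D_set b L \<union> Dc_set a b \<union> Df_set a) = 2 * L"
    "measure lebesgue (Dc_set a b \<union> Df_set a) = 2 * b"
proof -
  have U: "measure lebesgue (A \<union> B) = measure lebesgue A + measure lebesgue B"
    if "A \<in> lmeasurable" "B \<in> lmeasurable" "A \<inter> B = {}" for A B
    using measure_Un3[OF that(1,2)] that(3) by simp
  have m: "measure lebesgue {p<..<q} = q - p" if "p \<le> q" for p q :: real using that by simp
  have DL: "D_set b L \<in> lmeasurable" "Dc_set a b \<in> lmeasurable" "Df_set a \<in> lmeasurable"
    unfolding D_set_def Dc_set_def Df_set_def by (auto intro: fmeasurable.Un)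
  show D: "measure lebesgue (D_set b L) = 2 * (L - b)"
    unfolding D_set_def using U[of "{-L<..<-b}" "{b<..<L}"] m[of "-L" "-b"] m[of b L] geom by auto
  show Df: "measure lebesgue (Df_set a) = 2 * a" unfolding Df_set_def using m[of "-a" a] geom by auto
  show Dc: "measure lebesgue (Dc_set a b) = 2 * (b - a)"
    unfolding Dc_set_def using U[of "{-b<..<-a}" "{a<..<b}"] m[of "-b" "-a"] m[of a b] geom by auto
  have d1: "D_set b L \<inter> Dc_set a b = {}" "(D_set b L \<union> Dc_set a b) \<inter> Df_set a = {}" "Dc_set a b \<inter> Df_set a = {}"
    unfolding D_set_def Dc_set_def Df_set_def using geom by auto
  show "measure lebesgue (D_set b L \<union> Dc_set a b \<union> Df_set a) = 2 * L"
    using U[OF fmeasurable.Un[OF DL(1,2)] DL(3) d1(2)] U[OF DL(1,2) d1(1)] D Dc Df by simp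
  show "measure lebesgue (Dc_set a b \<union> Df_set a) = 2 * b"
    using U[OF DL(2,3) d1(3)] Dc Df by simp
qed


definition ci :: "(real \<Rightarrow> real) \<Rightarrow> real" where "ci kper = cell_avg (\<lambda>y. inverse (kper y))"
definition Aav :: "(real \<Rightarrow> real) \<Rightarrow> real \<Rightarrow> real" where "Aav kper k = cell_avg (\<lambda>y. 2 / (k + kper y))"
definition Sx :: "real \<Rightarrow> real \<Rightarrow> real \<Rightarrow> (real \<Rightarrow> real) \<Rightarrow> real \<Rightarrow> real" where
  "Sx a b L kper k = 2 * (L - b) / k + 2 * a * ci kper + 2 * (b - a) * Aav kper k"
definition mval :: "real \<Rightarrow> real \<Rightarrow> real \<Rightarrow> (real \<Rightarrow> real) \<Rightarrow> real \<Rightarrow> real" where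
  "mval a b L kper k = 2 * L / Sx a b L kper k"

lemma cell_avg_int: "(f::real\<Rightarrow>real) absolutely_integrable_on {0..1} \<Longrightarrow> cell_avg f = integral {0..1} f"
  unfolding cell_avg_def by (rule lint_icc)

context
  fixes kper :: "real \<Rightarrow> real" and \<alpha> \<beta> :: real
  assumes kmeas: "kper \<in> borel_measurable lebesgue"
    and al: "0 < \<alpha>" and kb: "\<forall>x. \<alpha> \<le> kper x \<and> kper x \<le> \<beta>"
begin

lemma kpos: "kper x > 0" using kb al by (metis less_le_trans)
lemma kge: "\<alpha> \<le> kper x" using kb by blast
lemma kle: "kper x \<le> \<beta>" using kb by blast


lemma inv_meas: "(\<lambda>y. inverse (kper y)) \<in> borel_measurable lebesgue"
  using kmeas by (rule borel_measurable_inverse)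
lemma A_meas: "(\<lambda>y. 2 / (k + kper y)) \<in> borel_measurable lebesgue"
  by (rule borel_measurable_divide[OF borel_measurable_const borel_measurable_add[OF borel_measurable_const kmeas]])

lemma inv_ai: "(\<lambda>y. inverse (kper y)) absolutely_integrable_on {p..q}"
proof (rule bm_ai[OF inv_meas])
  fix x show "\<bar>inverse (kper x)\<bar> \<le> 1 / \<alpha>"
    using kpos[of x] kge[of x] al by (simp add: inverse_eq_divide frac_le)
qed simp

lemma A_ai: "k > 0 \<Longrightarrow> (\<lambda>y. 2 / (k + kper y)) absolutely_integrable_on {p..q}"
proof (rule bm_ai[OF A_meas])
  fix x assume k: "k > 0"
  have "k + kper x \<ge> \<alpha>" using kge[of x] k by linarith
  then show "\<bar>2 / (k + kper x)\<bar> \<le> 2 / \<alpha>" using kpos[of x] k al by (simp add: frac_le)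
qed simp

lemma ci_bounds: "1 / \<beta> \<le> ci kper" "ci kper \<le> 1 / \<alpha>"
proof -
  have ci: "ci kper = integral {0..1} (\<lambda>y. inverse (kper y))"
    unfolding ci_def by (rule cell_avg_int[OF inv_ai])
  have ii: "(\<lambda>y. inverse (kper y)) integrable_on {0..1}" by (rule ai_int[OF inv_ai])
  have "integral {0..1} (\<lambda>y::real. 1 / \<beta>) \<le> integral {0..1} (\<lambda>y. inverse (kper y))"
  proof (rule Henstock_Kurzweil_Integration.integral_le[of "\<lambda>y. 1 / \<beta>" "{0..1}" "\<lambda>y. inverse (kper y)", OF _ ii])
    show "(\<lambda>y. 1 / \<beta>) integrable_on {0..1::real}" by (rule integrable_on_const) simp
    fix x show "1 / \<beta> \<le> inverse (kper x)" using kpos[of x] kle[of x] by (simp add: inverse_eq_divide frac_le)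
  qed
  then show "1 / \<beta> \<le> ci kper" using ci by simp
  have "integral {0..1} (\<lambda>y. inverse (kper y)) \<le> integral {0..1} (\<lambda>y::real. 1 / \<alpha>)"
    by (rule Henstock_Kurzweil_Integration.integral_le[OF ii]) (use kpos kge al in \<open>auto simp: inverse_eq_divide frac_le\<close>)
  then show "ci kper \<le> 1 / \<alpha>" using ci by simp
qed

lemma ci_pos: "ci kper > 0"
proof -
  have "\<beta> > 0" using kpos[of 0] kle[of 0] by linarith
  then have "1 / \<beta> > 0" by simp
  then show ?thesis using ci_bounds(1) by linarith
qed

lemma A_bounds: assumes k: "k > 0" shows "0 \<le> Aav kper k" "Aav kper k \<le> 2 / \<alpha>"
proof -
  have A: "Aav kper k = integral {0..1} (\<lambda>y. 2 / (k + kper y))"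
    unfolding Aav_def by (rule cell_avg_int[OF A_ai[OF k]])
  have ii: "(\<lambda>y. 2 / (k + kper y)) integrable_on {0..1}" by (rule ai_int[OF A_ai[OF k]])
  have "integral {0..1} (\<lambda>y::real. 0) \<le> integral {0..1} (\<lambda>y. 2 / (k + kper y))"
  proof (rule Henstock_Kurzweil_Integration.integral_le[of "\<lambda>y. 0" "{0..1}" "\<lambda>y. 2 / (k + kper y)", OF _ ii])
    show "(\<lambda>y. 0) integrable_on {0..1::real}" by (rule integrable_on_const) simp
    fix x show "0 \<le> 2 / (k + kper x)" using kpos[of x] k by simp
  qed
  then show "0 \<le> Aav kper k" using A by simp
  have "integral {0..1} (\<lambda>y. 2 / (k + kper y)) \<le> integral {0..1} (\<lambda>y::real. 2 / \<alpha>)"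
  proof (rule Henstock_Kurzweil_Integration.integral_le[OF ii])
    fix x have "k + kper x \<ge> \<alpha>" using kge[of x] k by linarith
    then show "2 / (k + kper x) \<le> 2 / \<alpha>" using al by (simp add: frac_le)
  qed (rule integrable_on_const, simp)
  then show "Aav kper k \<le> 2 / \<alpha>" using A by simp
qed

end


definition cfn :: "real \<Rightarrow> real \<Rightarrow> (real \<Rightarrow> real) \<Rightarrow> real \<Rightarrow> real \<Rightarrow> real \<Rightarrow> real" where
  "cfn a b kper \<epsilon> k x = (if x \<in> Df_set a then kper (x / \<epsilon>) else if x \<in> Dc_set a b then (k + kper (x / \<epsilon>)) / 2 else k)"
definition hfn :: "real \<Rightarrow> real \<Rightarrow> real \<Rightarrow> (real \<Rightarrow> real) \<Rightarrow> real \<Rightarrow> real \<Rightarrow> real \<Rightarrow> real" where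
  "hfn a b L kper \<epsilon> k x = mval a b L kper k / cfn a b kper \<epsilon> k x"
definition Ufn :: "real \<Rightarrow> real \<Rightarrow> real \<Rightarrow> (real \<Rightarrow> real) \<Rightarrow> real \<Rightarrow> real \<Rightarrow> real \<Rightarrow> real" where
  "Ufn a b L kper \<epsilon> k x = -L + integral {-L..x} (hfn a b L kper \<epsilon> k)"

context
  fixes a b L \<epsilon> \<alpha> \<beta> kbar :: real and kper :: "real \<Rightarrow> real" and n1 n2 :: nat
  assumes geom: "0 < a" "a < b" "b < L" and e: "0 < \<epsilon>"
    and n1: "2 * a = real n1 * \<epsilon>" and n2: "b - a = real n2 * \<epsilon>"
    and kmeas: "kper \<in> borel_measurable lebesgue" and kper: "\<forall>x. kper (x + 1) = kper x"
    and al: "0 < \<alpha>" and kb: "\<forall>x. \<alpha> \<le> kper x \<and> kper x \<le> \<beta>" and kbar: "0 < kbar"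
begin

lemma Kpos: "kper y > 0" by (rule kpos[OF kmeas al kb])
lemma Kge: "\<alpha> \<le> kper y" by (rule kge[OF kmeas al kb])
lemma Kle: "kper y \<le> \<beta>" by (rule kle[OF kmeas al kb])

lemma Km: "(\<lambda>x. kper (x / \<epsilon>)) \<in> borel_measurable lebesgue"
  using borel_measurable_affine[OF kmeas, of "1/\<epsilon>" 0] e by (simp add: divide_inverse mult.commute)

lemma Cm: "(\<lambda>x. (kbar + kper (x / \<epsilon>)) / 2) \<in> borel_measurable lebesgue"
  by (rule borel_measurable_divide[OF borel_measurable_add[OF borel_measurable_const Km] borel_measurable_const])

lemma Hm: "(\<lambda>x. (1/2) * kper (x / \<epsilon>)) \<in> borel_measurable lebesgue"
  by (rule borel_measurable_times[OF borel_measurable_const Km])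

lemma bnd_img: "bounded ((\<lambda>x. c1 + c2 * kper (x / \<epsilon>)) ` S)"
  unfolding bounded_iff
proof (intro exI ballI)
  fix y assume "y \<in> (\<lambda>x. c1 + c2 * kper (x / \<epsilon>)) ` S"
  then obtain x where y: "y = c1 + c2 * kper (x / \<epsilon>)" by auto
  have k: "\<bar>kper (x / \<epsilon>)\<bar> \<le> \<beta>" using Kpos[of "x/\<epsilon>"] Kle[of "x/\<epsilon>"] by simp
  have "\<bar>c2 * kper (x / \<epsilon>)\<bar> \<le> \<bar>c2\<bar> * \<beta>" unfolding abs_mult by (rule mult_left_mono[OF k]) simp
  then show "norm y \<le> \<bar>c1\<bar> + \<bar>c2\<bar> * \<beta>" unfolding y by simp
qed

lemma bndK: "bounded ((\<lambda>x. kper (x / \<epsilon>)) ` S)" using bnd_img[of 0 1 S] by simp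
lemma bndC: "bounded ((\<lambda>x. (kbar + kper (x / \<epsilon>)) / 2) ` S)"
  using bnd_img[of "kbar/2" "1/2" S] by (simp add: add_divide_distrib)
lemma bndH: "bounded ((\<lambda>x. (1/2) * kper (x / \<epsilon>)) ` S)" using bnd_img[of 0 "1/2" S] by simp

lemma sets_D: "D_set b L \<in> lmeasurable" "Df_set a \<in> lmeasurable" "Dc_set a b \<in> lmeasurable"
  unfolding D_set_def Dc_set_def Df_set_def by (auto intro: fmeasurable.Un)

lemma sD: "(LINT x:D_set b L|lebesgue. 1 / kbar) = 2 * (L - b) / kbar"
proof -
  have "(LINT x:D_set b L|lebesgue. 1 / kbar) = measure lebesgue (D_set b L) *\<^sub>R (1 / kbar)"
    by (rule set_integral_const) (use sets_D(1) in \<open>auto simp: fmeasurable_def\<close>)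
  then show ?thesis using meas_facts(1)[OF geom] by simp
qed

lemma sDf: "(LINT x:Df_set a|lebesgue. 1 / kper (x / \<epsilon>)) = 2 * a * ci kper"
proof -
  have m: "(\<lambda>y. 1 / kper y) \<in> borel_measurable lebesgue"
    by (rule borel_measurable_divide[OF borel_measurable_const kmeas])
  have bd: "\<bar>1 / kper y\<bar> \<le> 1 / \<alpha>" for y using Kpos[of y] Kge[of y] al by (simp add: frac_le)
  have "(LINT x:{-a<..<a}|lebesgue. 1 / kper (x / \<epsilon>)) = (a - -a) * cell_avg (\<lambda>y. 1 / kper y)"
    by (rule per_lint_eps[of "\<lambda>y. 1 / kper y", OF _ m bd e]) (use kper n1 in auto)
  moreover have "cell_avg (\<lambda>y. 1 / kper y) = ci kper" unfolding ci_def by (simp add: inverse_eq_divide)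
  ultimately show ?thesis unfolding Df_set_def by simp
qed

lemma sDc: "(LINT x:Dc_set a b|lebesgue. 1 / ((kbar + kper (x / \<epsilon>)) / 2)) = 2 * (b - a) * Aav kper kbar"
proof -
  define f where "f y = 1 / ((kbar + kper y) / 2)" for y
  have m: "f \<in> borel_measurable lebesgue" unfolding f_def
    by (rule borel_measurable_divide[OF borel_measurable_const borel_measurable_divide[OF borel_measurable_add[OF borel_measurable_const kmeas] borel_measurable_const]])
  have bd: "\<bar>f y\<bar> \<le> 2 / \<alpha>" for y
  proof -
    have "kbar + kper y \<ge> \<alpha>" using Kge[of y] kbar by linarith
    then show ?thesis unfolding f_def using al by (simp add: frac_le)
  qed
  have per: "\<forall>x. f (x + 1) = f x" using kper unfolding f_def by simp
  have fm: "(\<lambda>x. f (x / \<epsilon>)) \<in> borel_measurable lebesgue"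
    using borel_measurable_affine[OF m, of "1/\<epsilon>" 0] e by (simp add: divide_inverse mult.commute)
  have i1: "set_integrable lebesgue {-b<..<-a} (\<lambda>x. f (x / \<epsilon>))" by (rule bm_ai[OF fm bd]) simp
  have i2: "set_integrable lebesgue {a<..<b} (\<lambda>x. f (x / \<epsilon>))" by (rule bm_ai[OF fm bd]) simp
  have "(LINT x:Dc_set a b|lebesgue. f (x / \<epsilon>)) = (LINT x:{-b<..<-a}|lebesgue. f (x / \<epsilon>)) + (LINT x:{a<..<b}|lebesgue. f (x / \<epsilon>))"
    unfolding Dc_set_def by (rule set_integral_Un[OF _ i1 i2]) (use geom in auto)
  also have "(LINT x:{-b<..<-a}|lebesgue. f (x / \<epsilon>)) = (-a - -b) * cell_avg f"
    by (rule per_lint_eps[OF per m bd e, where n=n2]) (use n2 in \<open>auto simp: algebra_simps\<close>)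
  also have "(LINT x:{a<..<b}|lebesgue. f (x / \<epsilon>)) = (b - a) * cell_avg f"
    by (rule per_lint_eps[OF per m bd e, where n=n2]) (use n2 in \<open>auto simp: algebra_simps\<close>)
  also have "cell_avg f = Aav kper kbar" unfolding Aav_def f_def by simp
  finally show ?thesis unfolding f_def by simp
qed

lemma S_pos: "Sx a b L kper kbar > 0"
proof -
  have "2 * (L - b) / kbar > 0" using geom kbar by simp
  moreover have "2 * a * ci kper \<ge> 0" using ci_pos[OF kmeas al kb] geom by simp
  moreover have "2 * (b - a) * Aav kper kbar \<ge> 0" using A_bounds(1)[OF kmeas al kb kbar] geom by simp
  ultimately show ?thesis unfolding Sx_def by linarith
qed

lemma mS: "mval a b L kper kbar * Sx a b L kper kbar = 2 * L"
  unfolding mval_def using S_pos by simp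

lemma S_split: "(LINT x:D_set b L|lebesgue. 1 / kbar) + (LINT x:Df_set a|lebesgue. 1 / kper (x / \<epsilon>))
   + (LINT x:Dc_set a b|lebesgue. 1 / ((kbar + kper (x / \<epsilon>)) / 2)) = Sx a b L kper kbar"
  unfolding sD sDf sDc Sx_def by simp

end


context
  fixes a b L \<epsilon> \<alpha> \<beta> kbar :: real and kper :: "real \<Rightarrow> real" and n1 n2 :: nat
  assumes geom: "0 < a" "a < b" "b < L" and e: "0 < \<epsilon>"
    and n1: "2 * a = real n1 * \<epsilon>" and n2: "b - a = real n2 * \<epsilon>"
    and kmeas: "kper \<in> borel_measurable lebesgue" and kper: "\<forall>x. kper (x + 1) = kper x"
    and al: "0 < \<alpha>" and kb: "\<forall>x. \<alpha> \<le> kper x \<and> kper x \<le> \<beta>" and kbar: "0 < kbar"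
begin

lemmas ctx6 = geom e n1 n2 kmeas kper al kb kbar

lemma adm_int:
  assumes adm: "admissible a b L ubar gbar u g"
  shows "set_integrable lebesgue (D_set b L) gbar"
    "set_integrable lebesgue (D_set b L) (\<lambda>x. kbar * (gbar x)^2)"
    "set_integrable lebesgue (Df_set a) g"
    "set_integrable lebesgue (Df_set a) (\<lambda>x. kper (x / \<epsilon>) * (g x)^2)"
    "set_integrable lebesgue (Dc_set a b) g"
    "set_integrable lebesgue (Dc_set a b) (\<lambda>x. (kbar + kper (x / \<epsilon>)) / 2 * (g x)^2)"
    "set_integrable lebesgue (Dc_set a b) (\<lambda>x. (1/2) * kbar * (gbar x)^2 + (1/2) * kper (x / \<epsilon>) * (g x)^2)"
proof -
  from adm have H1: "H1_on (-L) (-a) ubar gbar" "H1_on a L ubar gbar" "H1_on (-b) b u g"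
    unfolding admissible_def by auto
  have le: "-L \<le> -L" "-L \<le> -b" "-b \<le> -a" "a \<le> b" "b \<le> L" "L \<le> L" "-b \<le> -b" "-a \<le> a" "-a \<le> -a" "a \<le> a" "-a \<le> b" "-b \<le> a" "b \<le> b"
    using geom by auto
  note A1 = H1_sub[OF H1(1) le(1,2,3)] and A2 = H1_sub[OF H1(2) le(4,5,6)]
  note A3 = H1_sub[OF H1(1) le(2,3,9)] and A4 = H1_sub[OF H1(2) le(10,4,5)]
  note B1 = H1_sub[OF H1(3) le(7,3,11)] and B2 = H1_sub[OF H1(3) le(3,8,4)] and B3 = H1_sub[OF H1(3) le(12,4,13)]
  have bb: "-b \<le> b" "-a \<le> a" using geom by auto
  show "set_integrable lebesgue (D_set b L) gbar"
    unfolding D_set_def by (rule lint_union2(2)[OF A1(1) A2(1) bb(1)])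
  have "set_integrable lebesgue (D_set b L) (\<lambda>x. (gbar x)^2)"
    unfolding D_set_def by (rule lint_union2(2)[OF A1(2) A2(2) bb(1)])
  then show "set_integrable lebesgue (D_set b L) (\<lambda>x. kbar * (gbar x)^2)" by (rule set_integrable_mult_right)
  show "set_integrable lebesgue (Df_set a) g"
    unfolding Df_set_def by (rule ai_open_closed[THEN iffD2, OF B2(1)])
  have g2f: "set_integrable lebesgue (Df_set a) (\<lambda>x. (g x)^2)"
    unfolding Df_set_def by (rule ai_open_closed[THEN iffD2, OF B2(2)])
  show "set_integrable lebesgue (Df_set a) (\<lambda>x. kper (x / \<epsilon>) * (g x)^2)"
    by (rule absolutely_integrable_bounded_measurable_product_real[OF measurable_restrict_space1[OF Km[OF ctx6]] _ bndK[OF ctx6] g2f])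
      (use sets_D(2)[OF ctx6] in \<open>simp add: fmeasurable_def\<close>)
  show "set_integrable lebesgue (Dc_set a b) g"
    unfolding Dc_set_def by (rule lint_union2(2)[OF B1(1) B3(1) bb(2)])
  have g2c: "set_integrable lebesgue (Dc_set a b) (\<lambda>x. (g x)^2)"
    unfolding Dc_set_def by (rule lint_union2(2)[OF B1(2) B3(2) bb(2)])
  have gb2c: "set_integrable lebesgue (Dc_set a b) (\<lambda>x. (gbar x)^2)"
    unfolding Dc_set_def by (rule lint_union2(2)[OF A3(2) A4(2) bb(2)])
  have sc: "Dc_set a b \<in> sets lebesgue" using sets_D(3)[OF ctx6] by (simp add: fmeasurable_def)
  show "set_integrable lebesgue (Dc_set a b) (\<lambda>x. (kbar + kper (x / \<epsilon>)) / 2 * (g x)^2)"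
    by (rule absolutely_integrable_bounded_measurable_product_real[OF measurable_restrict_space1[OF Cm[OF ctx6]] sc bndC[OF ctx6] g2c])
  have h1: "set_integrable lebesgue (Dc_set a b) (\<lambda>x. (1/2) * kbar * (gbar x)^2)"
    using gb2c by (rule set_integrable_mult_right)
  have h2: "set_integrable lebesgue (Dc_set a b) (\<lambda>x. (1/2) * kper (x / \<epsilon>) * (g x)^2)"
    by (rule absolutely_integrable_bounded_measurable_product_real[OF measurable_restrict_space1[OF Hm[OF ctx6]] sc bndH[OF ctx6] g2c])
  show "set_integrable lebesgue (Dc_set a b) (\<lambda>x. (1/2) * kbar * (gbar x)^2 + (1/2) * kper (x / \<epsilon>) * (g x)^2)"
    using h1 h2 by (rule set_integral_add(1))
qed

lemma recip_int:
  "set_integrable lebesgue (D_set b L) (\<lambda>x. 1 / kbar)"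
  "set_integrable lebesgue (Df_set a) (\<lambda>x. 1 / kper (x / \<epsilon>))"
  "set_integrable lebesgue (Dc_set a b) (\<lambda>x. 1 / ((kbar + kper (x / \<epsilon>)) / 2))"
proof -
  show "set_integrable lebesgue (D_set b L) (\<lambda>x. 1 / kbar)"
    by (rule bm_ai[OF borel_measurable_const _ sets_D(1)[OF ctx6], of _ "1/kbar"]) (use kbar in simp)
  show "set_integrable lebesgue (Df_set a) (\<lambda>x. 1 / kper (x / \<epsilon>))"
  proof (rule bm_ai[OF borel_measurable_divide[OF borel_measurable_const Km[OF ctx6]] _ sets_D(2)[OF ctx6]])
    fix x show "\<bar>1 / kper (x / \<epsilon>)\<bar> \<le> 1 / \<alpha>"
      using Kpos[OF ctx6, of "x/\<epsilon>"] Kge[OF ctx6, of "x/\<epsilon>"] al by (simp add: frac_le)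
  qed
  show "set_integrable lebesgue (Dc_set a b) (\<lambda>x. 1 / ((kbar + kper (x / \<epsilon>)) / 2))"
  proof (rule bm_ai[OF borel_measurable_divide[OF borel_measurable_const Cm[OF ctx6]] _ sets_D(3)[OF ctx6]])
    fix x
    have "kbar + kper (x / \<epsilon>) \<ge> \<alpha>" using Kge[OF ctx6, of "x/\<epsilon>"] kbar by linarith
    then show "\<bar>1 / ((kbar + kper (x / \<epsilon>)) / 2)\<bar> \<le> 2 / \<alpha>" using al by (simp add: frac_le)
  qed
qed

lemma energy_id:
  assumes adm: "admissible a b L ubar gbar u g"
  defines "m \<equiv> mval a b L kper kbar"
  shows "energy a b L kper \<epsilon> kbar gbar g = m * L + (1/2) * (
      (LINT x:D_set b L|lebesgue. kbar * (gbar x - m / kbar)^2)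
    + (LINT x:Df_set a|lebesgue. kper (x / \<epsilon>) * (g x - m / kper (x / \<epsilon>))^2)
    + (LINT x:Dc_set a b|lebesgue. ((kbar + kper (x / \<epsilon>)) / 2) * (g x - m / ((kbar + kper (x / \<epsilon>)) / 2))^2))"
proof -
  note I = adm_int[OF adm] and R = recip_int
  have sets: "D_set b L \<in> sets lebesgue" "Df_set a \<in> sets lebesgue" "Dc_set a b \<in> sets lebesgue"
    using sets_D[OF ctx6] by (simp_all add: fmeasurable_def)
  define ID where "ID = (LINT x:D_set b L|lebesgue. kbar * (gbar x)^2)"
  define IDf where "IDf = (LINT x:Df_set a|lebesgue. kper (x / \<epsilon>) * (g x)^2)"
  define IDc where "IDc = (LINT x:Dc_set a b|lebesgue. (kbar + kper (x / \<epsilon>)) / 2 * (g x)^2)"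
  define TD where "TD = (LINT x:D_set b L|lebesgue. gbar x)"
  define TDf where "TDf = (LINT x:Df_set a|lebesgue. g x)"
  define TDc where "TDc = (LINT x:Dc_set a b|lebesgue. g x)"
  define sD where "sD = (LINT x:D_set b L|lebesgue. 1 / kbar)"
  define sDf where "sDf = (LINT x:Df_set a|lebesgue. 1 / kper (x / \<epsilon>))"
  define sDc where "sDc = (LINT x:Dc_set a b|lebesgue. 1 / ((kbar + kper (x / \<epsilon>)) / 2))"
  have q1: "(LINT x:D_set b L|lebesgue. kbar * (gbar x - m / kbar)^2) = ID - 2 * m * TD + m^2 * sD"
    unfolding ID_def TD_def sD_def
    using quad_int(1)[where c="\<lambda>x. kbar" and y=gbar, OF I(2) I(1) R(1) _ sets(1)] kbar by simp
  have q2: "(LINT x:Df_set a|lebesgue. kper (x / \<epsilon>) * (g x - m / kper (x / \<epsilon>))^2) = IDf - 2 * m * TDf + m^2 * sDf"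
    unfolding IDf_def TDf_def sDf_def
    by (rule quad_int(1)[where c="\<lambda>x. kper (x / \<epsilon>)" and y=g, OF I(4) I(3) R(2) _ sets(2)]) (rule Kpos[OF ctx6])
  have q3: "(LINT x:Dc_set a b|lebesgue. ((kbar + kper (x / \<epsilon>)) / 2) * (g x - m / ((kbar + kper (x / \<epsilon>)) / 2))^2)
      = IDc - 2 * m * TDc + m^2 * sDc"
    unfolding IDc_def TDc_def sDc_def
  proof (rule quad_int(1)[where c="\<lambda>x. (kbar + kper (x / \<epsilon>)) / 2" and y=g, OF I(6) I(5) R(3) _ sets(3)])
    fix x show "(kbar + kper (x / \<epsilon>)) / 2 > 0" using Kpos[OF ctx6, of "x/\<epsilon>"] kbar by simp
  qed
  have ae: "AE x in lebesgue. x \<in> Dc_set a b \<longrightarrow> gbar x = g x" by (rule adm_facts(1)[OF geom adm])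
  have cdc: "(LINT x:Dc_set a b|lebesgue. (1/2) * kbar * (gbar x)^2 + (1/2) * kper (x / \<epsilon>) * (g x)^2) = IDc"
    unfolding IDc_def
    by (rule lint_cong_AE[OF I(7) I(6)]) (use ae in \<open>eventually_elim, auto simp: field_simps\<close>)
  have T: "TD + TDf + TDc = 2 * L" unfolding TD_def TDf_def TDc_def by (rule T_total[OF geom adm])
  have S: "sD + sDf + sDc = Sx a b L kper kbar" unfolding sD_def sDf_def sDc_def by (rule S_split[OF ctx6])
  have mS': "m * Sx a b L kper kbar = 2 * L" unfolding m_def by (rule mS[OF ctx6])
  have E: "energy a b L kper \<epsilon> kbar gbar g = (1/2) * ID + (1/2) * IDf + (1/2) * IDc"
    unfolding energy_def ID_def IDf_def cdc[symmetric] by simp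
  have k1: "m * TD + m * TDf + m * TDc = 2 * L * m"
  proof -
    have "m * TD + m * TDf + m * TDc = m * (TD + TDf + TDc)" by (simp add: distrib_left)
    also have "\<dots> = 2 * L * m" using T by simp
    finally show ?thesis .
  qed
  have k2: "m^2 * sD + m^2 * sDf + m^2 * sDc = 2 * L * m"
  proof -
    have "m^2 * sD + m^2 * sDf + m^2 * sDc = m * (m * (sD + sDf + sDc))" by (simp add: power2_eq_square algebra_simps)
    also have "\<dots> = 2 * L * m" using S mS' by simp
    finally show ?thesis .
  qed
  show ?thesis unfolding q1 q2 q3 E using k1 k2 by (simp add: algebra_simps)
qed

end


context
  fixes a b L \<epsilon> \<alpha> \<beta> kbar :: real and kper :: "real \<Rightarrow> real" and n1 n2 :: nat
  assumes geom: "0 < a" "a < b" "b < L" and e: "0 < \<epsilon>"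
    and n1: "2 * a = real n1 * \<epsilon>" and n2: "b - a = real n2 * \<epsilon>"
    and kmeas: "kper \<in> borel_measurable lebesgue" and kper: "\<forall>x. kper (x + 1) = kper x"
    and al: "0 < \<alpha>" and kb: "\<forall>x. \<alpha> \<le> kper x \<and> kper x \<le> \<beta>" and kbar: "0 < kbar"
begin

lemmas ctx7 = geom e n1 n2 kmeas kper al kb kbar

lemma cf_ge: "cfn a b kper \<epsilon> kbar x \<ge> min \<alpha> kbar"
proof -
  have k: "kper (x / \<epsilon>) \<ge> \<alpha>" by (rule Kge[OF ctx7])
  show ?thesis unfolding cfn_def using k by auto
qed

lemma minpos: "min \<alpha> kbar > 0" using al kbar by simp

lemma h_fun: "hfn a b L kper \<epsilon> kbar = (\<lambda>x. mval a b L kper kbar / (if x \<in> Df_set a then kper (x / \<epsilon>)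
   else if x \<in> Dc_set a b then (kbar + kper (x / \<epsilon>)) / 2 else kbar))"
  by (rule ext) (simp only: hfn_def cfn_def)

lemma h_meas: "hfn a b L kper \<epsilon> kbar \<in> borel_measurable lebesgue"
proof -
  have s: "Df_set a \<inter> space lebesgue \<in> sets lebesgue" "Dc_set a b \<inter> space lebesgue \<in> sets lebesgue"
    using sets_D[OF ctx7] by (simp_all add: fmeasurable_def)
  show ?thesis unfolding h_fun
    by (rule borel_measurable_divide[OF borel_measurable_const measurable_If_set[OF Km[OF ctx7] measurable_If_set[OF Cm[OF ctx7] borel_measurable_const s(2)] s(1)]])
qed

lemma h_bnd: "\<bar>hfn a b L kper \<epsilon> kbar x\<bar> \<le> \<bar>mval a b L kper kbar\<bar> / min \<alpha> kbar"
proof -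
  have c: "cfn a b kper \<epsilon> kbar x \<ge> min \<alpha> kbar" by (rule cf_ge)
  then have cp: "cfn a b kper \<epsilon> kbar x > 0" using minpos by linarith
  have "\<bar>hfn a b L kper \<epsilon> kbar x\<bar> = \<bar>mval a b L kper kbar\<bar> / cfn a b kper \<epsilon> kbar x"
    unfolding hfn_def using cp by simp
  also have "\<dots> \<le> \<bar>mval a b L kper kbar\<bar> / min \<alpha> kbar"
    by (rule divide_left_mono[OF c abs_ge_zero]) (use cp minpos in simp)
  finally show ?thesis .
qed

lemma h_ai: "hfn a b L kper \<epsilon> kbar absolutely_integrable_on {p..q}"
  by (rule bm_ai[OF h_meas h_bnd]) simp

lemma h2_ai: "(\<lambda>x. (hfn a b L kper \<epsilon> kbar x)^2) absolutely_integrable_on {p..q}"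
proof (rule bm_ai[OF borel_measurable_power[OF h_meas]])
  fix x
  have "\<bar>hfn a b L kper \<epsilon> kbar x\<bar>^2 \<le> (\<bar>mval a b L kper kbar\<bar> / min \<alpha> kbar)^2"
    by (rule power_mono[OF h_bnd abs_ge_zero])
  then show "\<bar>(hfn a b L kper \<epsilon> kbar x)^2\<bar> \<le> (\<bar>mval a b L kper kbar\<bar> / min \<alpha> kbar)^2" by simp
qed simp

lemma U_eq: "Ufn a b L kper \<epsilon> kbar = (\<lambda>x. -L + integral {-L..x} (hfn a b L kper \<epsilon> kbar))"
  by (rule ext) (simp only: Ufn_def)

lemma h_regions:
  "x \<in> D_set b L \<Longrightarrow> hfn a b L kper \<epsilon> kbar x = mval a b L kper kbar * (1 / kbar)"
  "x \<in> Df_set a \<Longrightarrow> hfn a b L kper \<epsilon> kbar x = mval a b L kper kbar * (1 / kper (x / \<epsilon>))"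
  "x \<in> Dc_set a b \<Longrightarrow> hfn a b L kper \<epsilon> kbar x = mval a b L kper kbar * (1 / ((kbar + kper (x / \<epsilon>)) / 2))"
proof -
  have d: "D_set b L \<inter> Df_set a = {}" "D_set b L \<inter> Dc_set a b = {}" "Df_set a \<inter> Dc_set a b = {}"
    unfolding D_set_def Dc_set_def Df_set_def using geom by auto
  show "x \<in> D_set b L \<Longrightarrow> hfn a b L kper \<epsilon> kbar x = mval a b L kper kbar * (1 / kbar)"
    using d unfolding hfn_def cfn_def by auto
  show "x \<in> Df_set a \<Longrightarrow> hfn a b L kper \<epsilon> kbar x = mval a b L kper kbar * (1 / kper (x / \<epsilon>))"
    using d unfolding hfn_def cfn_def by auto
  show "x \<in> Dc_set a b \<Longrightarrow> hfn a b L kper \<epsilon> kbar x = mval a b L kper kbar * (1 / ((kbar + kper (x / \<epsilon>)) / 2))"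
    using d unfolding hfn_def cfn_def by auto
qed

lemma h_total: "integral {-L..L} (hfn a b L kper \<epsilon> kbar) = 2 * L"
proof -
  let ?h = "hfn a b L kper \<epsilon> kbar" and ?m = "mval a b L kper kbar"
  have sets: "D_set b L \<in> sets lebesgue" "Df_set a \<in> sets lebesgue" "Dc_set a b \<in> sets lebesgue"
    using sets_D[OF ctx7] by (simp_all add: fmeasurable_def)
  have "integral {-L..L} ?h = (LINT x:D_set b L|lebesgue. ?h x) + (LINT x:Df_set a|lebesgue. ?h x) + (LINT x:Dc_set a b|lebesgue. ?h x)"
    by (rule split_LL[OF geom h_ai])
  also have "(LINT x:D_set b L|lebesgue. ?h x) = (LINT x:D_set b L|lebesgue. ?m * (1 / kbar))"
    by (rule set_lebesgue_integral_cong[OF sets(1)]) (use h_regions(1) in blast)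
  also have "(LINT x:Df_set a|lebesgue. ?h x) = (LINT x:Df_set a|lebesgue. ?m * (1 / kper (x / \<epsilon>)))"
    by (rule set_lebesgue_integral_cong[OF sets(2)]) (use h_regions(2) in blast)
  also have "(LINT x:Dc_set a b|lebesgue. ?h x) = (LINT x:Dc_set a b|lebesgue. ?m * (1 / ((kbar + kper (x / \<epsilon>)) / 2)))"
    by (rule set_lebesgue_integral_cong[OF sets(3)]) (use h_regions(3) in blast)
  also have "(LINT x:D_set b L|lebesgue. ?m * (1 / kbar)) + (LINT x:Df_set a|lebesgue. ?m * (1 / kper (x / \<epsilon>)))
      + (LINT x:Dc_set a b|lebesgue. ?m * (1 / ((kbar + kper (x / \<epsilon>)) / 2)))
     = ?m * ((LINT x:D_set b L|lebesgue. 1 / kbar) + (LINT x:Df_set a|lebesgue. 1 / kper (x / \<epsilon>))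
      + (LINT x:Dc_set a b|lebesgue. 1 / ((kbar + kper (x / \<epsilon>)) / 2)))"
    by (simp only: set_integral_mult_right distrib_left)
  also have "\<dots> = ?m * Sx a b L kper kbar" by (simp only: S_split[OF ctx7])
  also have "\<dots> = 2 * L" by (rule mS[OF ctx7])
  finally show ?thesis .
qed

lemma comp_adm: "admissible a b L (Ufn a b L kper \<epsilon> kbar) (hfn a b L kper \<epsilon> kbar) (Ufn a b L kper \<epsilon> kbar) (hfn a b L kper \<epsilon> kbar)"
  unfolding admissible_def
proof (intro conjI allI impI)
  let ?h = "hfn a b L kper \<epsilon> kbar" and ?U = "Ufn a b L kper \<epsilon> kbar"
  have le: "-L \<le> -L" "-L \<le> -a" "-L \<le> a" "a \<le> L" "-L \<le> -b" "-b \<le> b" using geom by auto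
  show "H1_on (-L) (-a) ?U ?h" unfolding U_eq by (rule H1_indef[OF h_ai h2_ai le(1,2)])
  show "H1_on a L ?U ?h" unfolding U_eq by (rule H1_indef[OF h_ai h2_ai le(3,4)])
  show "H1_on (-b) b ?U ?h" unfolding U_eq by (rule H1_indef[OF h_ai h2_ai le(5,6)])
  show "?U (-L) = -L" unfolding U_eq by simp
  show "?U L = L" unfolding U_eq h_total by simp
  fix \<phi> \<psi> :: "real \<Rightarrow> real"
  show "(LINT x:Dc_set a b|lebesgue. (?h x - ?h x) * \<psi> x + (?U x - ?U x) * \<phi> x) = 0" by simp
qed

lemma comp_energy: "energy a b L kper \<epsilon> kbar (hfn a b L kper \<epsilon> kbar) (hfn a b L kper \<epsilon> kbar) = mval a b L kper kbar * L"
proof -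
  let ?h = "hfn a b L kper \<epsilon> kbar" and ?m = "mval a b L kper kbar"
  have sets: "D_set b L \<in> sets lebesgue" "Df_set a \<in> sets lebesgue" "Dc_set a b \<in> sets lebesgue"
    using sets_D[OF ctx7] by (simp_all add: fmeasurable_def)
  have z1: "(LINT x:D_set b L|lebesgue. kbar * (?h x - ?m / kbar)^2) = 0"
  proof -
    have "(LINT x:D_set b L|lebesgue. kbar * (?h x - ?m / kbar)^2) = (LINT x:D_set b L|lebesgue. 0)"
      by (rule set_lebesgue_integral_cong[OF sets(1)]) (auto simp: h_regions(1))
    then show ?thesis by simp
  qed
  have z2: "(LINT x:Df_set a|lebesgue. kper (x / \<epsilon>) * (?h x - ?m / kper (x / \<epsilon>))^2) = 0"
  proof -
    have "(LINT x:Df_set a|lebesgue. kper (x / \<epsilon>) * (?h x - ?m / kper (x / \<epsilon>))^2) = (LINT x:Df_set a|lebesgue. 0)"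
      by (rule set_lebesgue_integral_cong[OF sets(2)]) (auto simp: h_regions(2))
    then show ?thesis by simp
  qed
  have z3: "(LINT x:Dc_set a b|lebesgue. ((kbar + kper (x / \<epsilon>)) / 2) * (?h x - ?m / ((kbar + kper (x / \<epsilon>)) / 2))^2) = 0"
  proof -
    have "(LINT x:Dc_set a b|lebesgue. ((kbar + kper (x / \<epsilon>)) / 2) * (?h x - ?m / ((kbar + kper (x / \<epsilon>)) / 2))^2) = (LINT x:Dc_set a b|lebesgue. 0)"
      by (rule set_lebesgue_integral_cong[OF sets(3)]) (auto simp: h_regions(3))
    then show ?thesis by simp
  qed
  show ?thesis using energy_id[OF ctx7 comp_adm] unfolding z1 z2 z3 by simp
qed

lemma part1:
  assumes mn: "is_minimizer a b L kper \<epsilon> kbar ubar gbar u g"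
  shows "AE x in lebesgue. x \<in> D_set b L \<longrightarrow> gbar x = mval a b L kper kbar / kbar"
proof -
  let ?m = "mval a b L kper kbar"
  have adm: "admissible a b L ubar gbar u g" using mn unfolding is_minimizer_def by blast
  have le: "energy a b L kper \<epsilon> kbar gbar g \<le> energy a b L kper \<epsilon> kbar (hfn a b L kper \<epsilon> kbar) (hfn a b L kper \<epsilon> kbar)"
    using mn comp_adm unfolding is_minimizer_def by blast
  define Q1 where "Q1 = (LINT x:D_set b L|lebesgue. kbar * (gbar x - ?m / kbar)^2)"
  define Q2 where "Q2 = (LINT x:Df_set a|lebesgue. kper (x / \<epsilon>) * (g x - ?m / kper (x / \<epsilon>))^2)"
  define Q3 where "Q3 = (LINT x:Dc_set a b|lebesgue. ((kbar + kper (x / \<epsilon>)) / 2) * (g x - ?m / ((kbar + kper (x / \<epsilon>)) / 2))^2)"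
  have E: "energy a b L kper \<epsilon> kbar gbar g = ?m * L + (1/2) * (Q1 + Q2 + Q3)"
    unfolding Q1_def Q2_def Q3_def by (rule energy_id[OF ctx7 adm])
  have n1: "Q1 \<ge> 0" unfolding Q1_def by (rule lint_nonneg) (use kbar in simp)
  have n2: "Q2 \<ge> 0" unfolding Q2_def by (rule lint_nonneg) (use Kpos[OF ctx7] in \<open>simp add: less_imp_le\<close>)
  have n3: "Q3 \<ge> 0" unfolding Q3_def
  proof (rule lint_nonneg)
    fix x have "(kbar + kper (x / \<epsilon>)) / 2 > 0" using Kpos[OF ctx7, of "x/\<epsilon>"] kbar by simp
    then show "0 \<le> (kbar + kper (x / \<epsilon>)) / 2 * (g x - ?m / ((kbar + kper (x / \<epsilon>)) / 2))^2" by simp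
  qed
  have "Q1 + Q2 + Q3 \<le> 0" using le E comp_energy by simp
  then have Q10: "Q1 = 0" using n1 n2 n3 by linarith
  have sets: "D_set b L \<in> sets lebesgue" using sets_D[OF ctx7] by (simp add: fmeasurable_def)
  have int: "set_integrable lebesgue (D_set b L) (\<lambda>x. kbar * (gbar x - ?m / kbar)^2)"
    using quad_int(2)[where c="\<lambda>x. kbar" and y=gbar and m="?m", OF adm_int(2)[OF ctx7 adm] adm_int(1)[OF ctx7 adm] recip_int(1)[OF ctx7] _ sets] kbar
    by simp
  have "AE x in lebesgue. x \<in> D_set b L \<longrightarrow> kbar * (gbar x - ?m / kbar)^2 = 0"
    by (rule nonneg0[OF int]) (use kbar Q10 Q1_def in auto)
  then show ?thesis by eventually_elim (use kbar in simp)
qed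

end


lemma int_cmul: "integral S (\<lambda>x. c * f x) = c * integral S (f :: real \<Rightarrow> real)"
  using integral_cmul[of S c f] by simp

definition Rf :: "real \<Rightarrow> real \<Rightarrow> (real \<Rightarrow> real) \<Rightarrow> real \<Rightarrow> real" where
  "Rf a b kper k = 2 * a * ci kper * k + 2 * (b - a) * (k * Aav kper k)"

context
  fixes kper :: "real \<Rightarrow> real" and \<alpha> \<beta> :: real
  assumes kmeas: "kper \<in> borel_measurable lebesgue"
    and al: "0 < \<alpha>" and kb: "\<forall>x. \<alpha> \<le> kper x \<and> kper x \<le> \<beta>"
begin

lemmas K3 = kmeas al kb

lemma Aav_int: "k > 0 \<Longrightarrow> Aav kper k = integral {0..1} (\<lambda>y. 2 / (k + kper y))"
  unfolding Aav_def by (rule cell_avg_int[OF A_ai[OF K3]])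

lemma kA_mono:
  assumes k: "0 < k" "k \<le> k'"
  shows "k * Aav kper k \<le> k' * Aav kper k'"
proof -
  have k': "0 < k'" using k by linarith
  have "k * Aav kper k = integral {0..1} (\<lambda>y. k * (2 / (k + kper y)))"
    unfolding Aav_int[OF k(1)] int_cmul ..
  also have "\<dots> \<le> integral {0..1} (\<lambda>y. k' * (2 / (k' + kper y)))"
  proof (rule Henstock_Kurzweil_Integration.integral_le)
    show "(\<lambda>y. k * (2 / (k + kper y))) integrable_on {0..1}"
      by (rule ai_int, rule set_integrable_mult_right, rule A_ai[OF K3 k(1)])
    show "(\<lambda>y. k' * (2 / (k' + kper y))) integrable_on {0..1}"
      by (rule ai_int, rule set_integrable_mult_right, rule A_ai[OF K3 k'])
    fix y
    have p: "kper y > 0" by (rule kpos[OF K3])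
    have "k * 2 * (k' + kper y) \<le> k' * 2 * (k + kper y)" using k p by (simp add: algebra_simps mult_right_mono)
    then show "k * (2 / (k + kper y)) \<le> k' * (2 / (k' + kper y))"
      using k k' p by (simp add: field_simps)
  qed
  also have "\<dots> = k' * Aav kper k'" unfolding Aav_int[OF k'] int_cmul ..
  finally show ?thesis .
qed

lemma A_lip:
  assumes k: "0 < k" "0 < k'"
  shows "\<bar>Aav kper k - Aav kper k'\<bar> \<le> 2 * \<bar>k - k'\<bar> / \<alpha>^2"
proof -
  define c where "c = 2 * \<bar>k - k'\<bar> / \<alpha>^2"
  have pt: "\<bar>2 / (k + kper y) - 2 / (k' + kper y)\<bar> \<le> c" for y
  proof -
    have p: "kper y \<ge> \<alpha>" by (rule kge[OF K3])
    have q1: "k + kper y \<ge> \<alpha>" "k' + kper y \<ge> \<alpha>" using p k by linarith+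
    have pp: "(k + kper y) * (k' + kper y) \<ge> \<alpha> * \<alpha>" by (rule mult_mono) (use q1 al in auto)
    have "2 / (k + kper y) - 2 / (k' + kper y) = 2 * (k' - k) / ((k + kper y) * (k' + kper y))"
      using q1 al by (simp add: field_simps)
    moreover have "\<bar>2 * (k' - k)\<bar> = 2 * \<bar>k - k'\<bar>" by (cases "k \<le> k'") auto
    moreover have "\<bar>(k + kper y) * (k' + kper y)\<bar> = (k + kper y) * (k' + kper y)" using q1 al by simp
    ultimately have "\<bar>2 / (k + kper y) - 2 / (k' + kper y)\<bar> = 2 * \<bar>k - k'\<bar> / ((k + kper y) * (k' + kper y))"
      by (simp only: abs_divide)
    also have "\<dots> \<le> 2 * \<bar>k - k'\<bar> / (\<alpha> * \<alpha>)"
    proof (rule divide_left_mono[OF pp])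
      have "k + kper y > 0" "k' + kper y > 0" using q1 al by linarith+
      then have "(k + kper y) * (k' + kper y) > 0" by simp
      then show "0 < (k + kper y) * (k' + kper y) * (\<alpha> * \<alpha>)" using al by simp
    qed simp
    finally show ?thesis unfolding c_def by (simp add: power2_eq_square)
  qed
  have i1: "(\<lambda>y. 2 / (k + kper y)) integrable_on {0..1}" by (rule ai_int[OF A_ai[OF K3 k(1)]])
  have i2: "(\<lambda>y. 2 / (k' + kper y)) integrable_on {0..1}" by (rule ai_int[OF A_ai[OF K3 k(2)]])
  have d: "Aav kper k - Aav kper k' = integral {0..1} (\<lambda>y. 2 / (k + kper y) - 2 / (k' + kper y))"
    unfolding Aav_int[OF k(1)] Aav_int[OF k(2)] by (rule Henstock_Kurzweil_Integration.integral_diff[OF i1 i2, symmetric])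
  have id: "(\<lambda>y. 2 / (k + kper y) - 2 / (k' + kper y)) integrable_on {0..1}"
    by (rule Henstock_Kurzweil_Integration.integrable_diff[OF i1 i2])
  have "norm (integral {0..1} (\<lambda>y. 2 / (k + kper y) - 2 / (k' + kper y))) \<le> integral {0..1} (\<lambda>y::real. c)"
    by (rule integral_norm_bound_integral[OF id]) (auto intro: integrable_on_const simp: pt)
  then show ?thesis using d unfolding c_def by simp
qed

lemma A_cont: "continuous_on {0<..} (Aav kper)"
  unfolding continuous_on_iff
proof (intro ballI allI impI)
  fix x e :: real assume x: "x \<in> {0<..}" and e: "e > 0"
  show "\<exists>d>0. \<forall>x'\<in>{0<..}. dist x' x < d \<longrightarrow> dist (Aav kper x') (Aav kper x) < e"
  proof (intro exI conjI ballI impI)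
    show "e * \<alpha>^2 / 2 > 0" using e al by simp
    fix x' assume x': "x' \<in> {0<..}" and d: "dist x' x < e * \<alpha>^2 / 2"
    have "\<bar>Aav kper x' - Aav kper x\<bar> \<le> 2 * \<bar>x' - x\<bar> / \<alpha>^2" by (rule A_lip) (use x x' in auto)
    also have "\<dots> < e"
    proof -
      have "\<bar>x' - x\<bar> < e * \<alpha>^2 / 2" using d by (simp add: dist_real_def)
      then have "2 * \<bar>x' - x\<bar> < e * \<alpha>^2" by simp
      then show ?thesis using al by (simp add: divide_less_eq)
    qed
    finally show "dist (Aav kper x') (Aav kper x) < e" by (simp add: dist_real_def)
  qed
qed

context
  fixes a b :: real
  assumes ab: "0 < a" "a < b"
begin

lemma R_cont: "continuous_on {0<..} (Rf a b kper)"
proof -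
  have "continuous_on {0<..} (\<lambda>k. 2 * a * ci kper * k + 2 * (b - a) * (k * Aav kper k))"
    by (intro continuous_on_add continuous_on_mult_left continuous_on_mult continuous_on_id A_cont)
  then show ?thesis unfolding Rf_def[abs_def] .
qed

lemma R_mono: assumes "0 < k" "k < k'" shows "Rf a b kper k < Rf a b kper k'"
proof -
  have "k * Aav kper k \<le> k' * Aav kper k'" by (rule kA_mono) (use assms in auto)
  moreover have "2 * a * ci kper * k < 2 * a * ci kper * k'"
    using ci_pos[OF K3] ab assms by simp
  moreover have "2 * (b - a) * (k * Aav kper k) \<le> 2 * (b - a) * (k' * Aav kper k')"
    by (rule mult_left_mono) (use ab calculation(1) in auto)
  ultimately show ?thesis unfolding Rf_def by linarith
qed

lemma R_exists: "\<exists>k>0. Rf a b kper k = 2 * b"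
proof -
  define M where "M = 2 * a * ci kper + 4 * (b - a) / \<alpha>"
  have cp: "ci kper > 0" by (rule ci_pos[OF K3])
  have Mp: "M \<ge> 2 * a * ci kper" "2 * a * ci kper > 0" unfolding M_def using ab al cp by auto
  define k1 where "k1 = 2 * b / M"
  define k2 where "k2 = b / (a * ci kper)"
  have k1p: "k1 > 0" unfolding k1_def using Mp ab by simp
  have k12: "k1 \<le> k2"
  proof -
    have "2 * b / M \<le> 2 * b / (2 * a * ci kper)" by (rule frac_le) (use ab Mp in auto)
    also have "\<dots> = b / (a * ci kper)" by simp
    finally show ?thesis unfolding k1_def k2_def .
  qed
  have "Rf a b kper k1 \<le> k1 * M"
  proof -
    have "Aav kper k1 \<le> 2 / \<alpha>" by (rule A_bounds(2)[OF K3 k1p])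
    then have "2 * (b - a) * (k1 * Aav kper k1) \<le> 2 * (b - a) * (k1 * (2 / \<alpha>))"
      using ab k1p by (intro mult_left_mono) auto
    moreover have e: "2 * (b - a) * (k1 * (2 / \<alpha>)) = k1 * (4 * (b - a) / \<alpha>)" using al by (simp add: field_simps)
    moreover have e2: "k1 * M = 2 * a * ci kper * k1 + k1 * (4 * (b - a) / \<alpha>)" unfolding M_def by (simp add: algebra_simps)
    moreover have "Rf a b kper k1 = 2 * a * ci kper * k1 + 2 * (b - a) * (k1 * Aav kper k1)" by (simp only: Rf_def)
    ultimately show ?thesis by linarith
  qed
  also have "k1 * M = 2 * b" unfolding k1_def using Mp by simp
  finally have r1: "Rf a b kper k1 \<le> 2 * b" .
  have k2p: "k2 > 0" using k1p k12 by linarith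
  have "Rf a b kper k2 \<ge> 2 * a * ci kper * k2"
  proof -
    have "Aav kper k2 \<ge> 0" by (rule A_bounds(1)[OF K3 k2p])
    then show ?thesis unfolding Rf_def using ab k2p by simp
  qed
  moreover have "2 * a * ci kper * k2 = 2 * b" unfolding k2_def using ab cp by simp
  ultimately have r2: "2 * b \<le> Rf a b kper k2" by simp
  have "continuous_on {k1..k2} (Rf a b kper)"
    by (rule continuous_on_subset[OF R_cont]) (use k1p in auto)
  then obtain k where "k1 \<le> k" "k \<le> k2" "Rf a b kper k = 2 * b"
    using IVT'[of "Rf a b kper" k1 "2 * b" k2] r1 r2 k12 by blast
  then show ?thesis using k1p by (intro exI[of _ k]) auto
qed

end

end


lemma per_AE:
  fixes kper :: "real \<Rightarrow> real"
  assumes per: "\<forall>x. kper (x + 1) = kper x" and ae: "AE y in lebesgue. y \<in> {0..1} \<longrightarrow> kper y = c"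
  shows "AE y in lebesgue. kper y = c"
proof -
  from ae obtain N where N: "{y \<in> space lebesgue. \<not> (y \<in> {0..1} \<longrightarrow> kper y = c)} \<subseteq> N"
    "emeasure lebesgue N = 0" "N \<in> sets lebesgue" by (rule AE_E)
  define Nk where "Nk k = (\<lambda>x. x + real_of_int k) ` N" for k :: int
  have null: "Nk k \<in> null_sets lebesgue" for k
  proof -
    have e: "(\<lambda>x. x + real_of_int k) = (\<lambda>x. real_of_int k + x)" by (auto simp: fun_eq_iff)
    have s: "Nk k \<in> sets lebesgue" unfolding Nk_def e by (rule lebesgue_sets_translation[OF N(3)])
    have "emeasure lebesgue (Nk k) = 0"
      using emeasure_lebesgue_affine[of 1 "real_of_int k" N] N(2) unfolding Nk_def by simp
    then show ?thesis using s by (simp add: null_sets_def)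
  qed
  have U: "(\<Union>k. Nk k) \<in> null_sets lebesgue" using null by (rule null_sets_UN)
  show ?thesis
  proof (rule AE_I'[OF U])
    show "{y \<in> space lebesgue. \<not> kper y = c} \<subseteq> (\<Union>k. Nk k)"
    proof
      fix y assume y: "y \<in> {y \<in> space lebesgue. \<not> kper y = c}"
      define k where "k = floor y"
      define z where "z = y - real_of_int k"
      have z: "0 \<le> z" "z \<le> 1" unfolding z_def k_def by linarith+
      have "kper (z + real_of_int k) = kper z" by (rule per_int_shift[OF per])
      then have "kper z = kper y" unfolding z_def by simp
      then have "z \<in> N" using y z N(1) by auto
      moreover have "y = z + real_of_int k" unfolding z_def by simp
      ultimately have "y \<in> Nk k" unfolding Nk_def by blast
      then show "y \<in> (\<Union>k. Nk k)" by blast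
    qed
  qed
qed

context
  fixes kper :: "real \<Rightarrow> real" and \<alpha> \<beta> :: real
  assumes kmeas: "kper \<in> borel_measurable lebesgue"
    and al: "0 < \<alpha>" and kb: "\<forall>x. \<alpha> \<le> kper x \<and> kper x \<le> \<beta>"
    and per: "\<forall>x. kper (x + 1) = kper x"
begin

lemmas K3' = kmeas al kb

lemma ks_facts: "kstar kper > 0" "kstar kper * ci kper = 1"
proof -
  have c: "ci kper > 0" by (rule ci_pos[OF K3'])
  have e: "kstar kper = inverse (ci kper)" unfolding kstar_def ci_def ..
  show "kstar kper > 0" using c e by simp
  show "kstar kper * ci kper = 1" using c e by simp
qed

lemma star_lt:
  assumes nc: "\<nexists>c. AE y in lebesgue. kper y = c"
  shows "kstar kper * Aav kper (kstar kper) < 1"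
proof -
  define ks where "ks = kstar kper"
  have ksp: "ks > 0" and ksc: "ks * ci kper = 1" using ks_facts unfolding ks_def by auto
  define F1 where "F1 y = ks * (2 / (ks + kper y))" for y
  define F2 where "F2 y = ks * inverse (kper y)" for y
  define W where "W y = (kper y - ks)^2 / (2 * kper y * (kper y + ks))" for y
  have p: "kper y > 0" for y by (rule kpos[OF K3'])
  have ident: "F1 y = 1/2 + (1/2) * F2 y - W y" for y
  proof -
    have "kper y \<noteq> 0" "kper y + ks \<noteq> 0" "ks + kper y \<noteq> 0" using p[of y] ksp by auto
    then show ?thesis unfolding F1_def F2_def W_def
      by (simp add: divide_simps power2_eq_square) algebra
  qed
  have Wnn: "W y \<ge> 0" for y unfolding W_def using p[of y] ksp by simp
  have S01: "{0..1::real} \<in> sets lebesgue" by simp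
  have iF1: "set_integrable lebesgue {0..1} F1" unfolding F1_def
    by (rule set_integrable_mult_right, rule A_ai[OF K3' ksp])
  have iF2: "set_integrable lebesgue {0..1} F2" unfolding F2_def
    by (rule set_integrable_mult_right, rule inv_ai[OF K3'])
  have ic: "set_integrable lebesgue {0..1::real} (\<lambda>y. 1/2::real)"
    by (rule bm_ai[OF borel_measurable_const, where B="1/2"]) auto
  have i3: "set_integrable lebesgue {0..1} (\<lambda>y. 1/2 + (1/2) * F2 y)"
    by (rule set_integral_add(1)[OF ic], rule set_integrable_mult_right, rule iF2)
  have i4: "set_integrable lebesgue {0..1} (\<lambda>y. 1/2 + (1/2) * F2 y - F1 y)"
    by (rule set_integral_diff(1)[OF i3 iF1])
  have iW: "set_integrable lebesgue {0..1} W"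
  proof (rule set_integrable_cong[THEN iffD1, OF refl refl _ i4])
    show "\<And>x. x \<in> {0..1} \<Longrightarrow> 1/2 + (1/2) * F2 x - F1 x = W x" using ident by simp
  qed
  have c1: "(LINT y:{0..1::real}|lebesgue. (1/2::real)) = 1/2"
  proof -
    have "(LINT y:{0..1::real}|lebesgue. (1/2::real)) = measure lebesgue {0..1::real} *\<^sub>R (1/2)"
      by (rule set_integral_const) (simp, metis fmeasurableD2 lmeas_Icc infinity_ennreal_def)
    then show ?thesis by simp
  qed
  have A: "ks * Aav kper ks = (LINT y:{0..1}|lebesgue. F1 y)"
    unfolding F1_def Aav_def cell_avg_def by (rule set_integral_mult_right[symmetric])
  have C: "(LINT y:{0..1}|lebesgue. F2 y) = 1"
    unfolding F2_def using ksc unfolding ci_def cell_avg_def by simp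
  have "(LINT y:{0..1}|lebesgue. F1 y) = (LINT y:{0..1}|lebesgue. 1/2 + (1/2) * F2 y - W y)"
    by (rule set_lebesgue_integral_cong[OF S01]) (use ident in simp)
  also have "\<dots> = (LINT y:{0..1}|lebesgue. 1/2 + (1/2) * F2 y) - (LINT y:{0..1}|lebesgue. W y)"
    by (rule set_integral_diff(2)[OF i3 iW])
  also have "(LINT y:{0..1}|lebesgue. 1/2 + (1/2) * F2 y) = 1/2 + (1/2) * (LINT y:{0..1}|lebesgue. F2 y)"
  proof -
    have iF2': "set_integrable lebesgue {0..1} (\<lambda>y. (1/2) * F2 y)" by (rule set_integrable_mult_right, rule iF2)
    have "(LINT y:{0..1}|lebesgue. 1/2 + (1/2) * F2 y) = (LINT y:{0..1::real}|lebesgue. (1/2::real)) + (LINT y:{0..1}|lebesgue. (1/2) * F2 y)"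
      by (rule set_integral_add(2)[OF ic iF2'])
    also have "(LINT y:{0..1}|lebesgue. (1/2) * F2 y) = (1/2) * (LINT y:{0..1}|lebesgue. F2 y)"
      by (rule set_integral_mult_right)
    finally show ?thesis unfolding c1 .
  qed
  finally have key: "ks * Aav kper ks = 1 - (LINT y:{0..1}|lebesgue. W y)" using A C by simp
  have Wpos: "(LINT y:{0..1}|lebesgue. W y) > 0"
  proof (rule ccontr)
    assume "\<not> (LINT y:{0..1}|lebesgue. W y) > 0"
    moreover have "(LINT y:{0..1}|lebesgue. W y) \<ge> 0" by (rule lint_nonneg) (rule Wnn)
    ultimately have "(LINT y:{0..1}|lebesgue. W y) = 0" by linarith
    then have "AE y in lebesgue. y \<in> {0..1} \<longrightarrow> W y = 0"
      by (intro nonneg0[OF iW]) (use Wnn in auto)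
    then have "AE y in lebesgue. y \<in> {0..1} \<longrightarrow> kper y = ks"
    proof eventually_elim
      case (elim y)
      show ?case
      proof
        assume "y \<in> {0..1}"
        then have "W y = 0" using elim by blast
        then show "kper y = ks" unfolding W_def using p[of y] ksp by simp
      qed
    qed
    then have "AE y in lebesgue. kper y = ks" by (rule per_AE[OF per])
    then show False using nc by blast
  qed
  show ?thesis using key Wpos unfolding ks_def by simp
qed

end


context
  fixes a b L \<epsilon> \<alpha> \<beta> kbar :: real and kper :: "real \<Rightarrow> real" and n1 n2 :: nat
  assumes geom: "0 < a" "a < b" "b < L" and e: "0 < \<epsilon>"
    and n1: "2 * a = real n1 * \<epsilon>" and n2: "b - a = real n2 * \<epsilon>"
    and kmeas: "kper \<in> borel_measurable lebesgue" and kper: "\<forall>x. kper (x + 1) = kper x"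
    and al: "0 < \<alpha>" and kb: "\<forall>x. \<alpha> \<le> kper x \<and> kper x \<le> \<beta>" and kbar: "0 < kbar"
begin

lemmas ctx10 = geom e n1 n2 kmeas kper al kb kbar

lemma J1D_val:
  assumes ex: "\<exists>ubar gbar u g. is_minimizer a b L kper \<epsilon> kbar ubar gbar u g"
  shows "J1D a b L kper \<epsilon> kbar = 2 * (L - b) * (mval a b L kper kbar / kbar - 1)^2"
proof -
  let ?m = "mval a b L kper kbar"
  define c where "c = (?m / kbar - 1)^2"
  have sD: "D_set b L \<in> sets lebesgue" using sets_D(1)[OF ctx10] by (simp add: fmeasurable_def)
  have each: "(LINT x:D_set b L|lebesgue. (gbar x - 1)^2) = 2 * (L - b) * c"
    if mn: "is_minimizer a b L kper \<epsilon> kbar ubar gbar u g" for ubar gbar u g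
  proof -
    have adm: "admissible a b L ubar gbar u g" using mn unfolding is_minimizer_def by blast
    have ae: "AE x in lebesgue. x \<in> D_set b L \<longrightarrow> gbar x = ?m / kbar" by (rule part1[OF ctx10 mn])
    have i1: "set_integrable lebesgue (D_set b L) gbar" by (rule adm_int(1)[OF ctx10 adm])
    have "set_integrable lebesgue (D_set b L) (\<lambda>x. (1 / kbar) * (kbar * (gbar x)^2))"
      by (rule set_integrable_mult_right, rule adm_int(2)[OF ctx10 adm])
    then have i2: "set_integrable lebesgue (D_set b L) (\<lambda>x. (gbar x)^2)"
      by (rule set_integrable_cong[THEN iffD1, OF refl refl, rotated]) (use kbar in simp)
    have ic: "set_integrable lebesgue (D_set b L) (\<lambda>x. 1::real)"
      by (rule bm_ai[OF borel_measurable_const _ sets_D(1)[OF ctx10], where B=1]) simp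
    have icc: "set_integrable lebesgue (D_set b L) (\<lambda>x. c)"
      by (rule bm_ai[OF borel_measurable_const _ sets_D(1)[OF ctx10], where B="\<bar>c\<bar>"]) simp
    have i3: "set_integrable lebesgue (D_set b L) (\<lambda>x. 2 * gbar x)" by (rule set_integrable_mult_right, rule i1)
    have i4: "set_integrable lebesgue (D_set b L) (\<lambda>x. (gbar x)^2 - 2 * gbar x)" by (rule set_integral_diff(1)[OF i2 i3])
    have i5: "set_integrable lebesgue (D_set b L) (\<lambda>x. ((gbar x)^2 - 2 * gbar x) + 1)" by (rule set_integral_add(1)[OF i4 ic])
    have i6: "set_integrable lebesgue (D_set b L) (\<lambda>x. (gbar x - 1)^2)"
      by (rule set_integrable_cong[THEN iffD1, OF refl refl _ i5]) (simp add: power2_eq_square algebra_simps)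
    have "(LINT x:D_set b L|lebesgue. (gbar x - 1)^2) = (LINT x:D_set b L|lebesgue. c)"
      by (rule lint_cong_AE[OF i6 icc]) (use ae in \<open>eventually_elim, simp add: c_def\<close>)
    also have "\<dots> = measure lebesgue (D_set b L) *\<^sub>R c"
      by (rule set_integral_const[OF sD]) (metis fmeasurableD2 sets_D(1)[OF ctx10] infinity_ennreal_def)
    also have "\<dots> = 2 * (L - b) * c" using meas_facts(1)[OF geom] by simp
    finally show ?thesis .
  qed
  define P where "P j = (\<exists>ubar gbar u g. is_minimizer a b L kper \<epsilon> kbar ubar gbar u g \<and>
        j = (LINT x:D_set b L|lebesgue. (gbar x - 1)^2))" for j
  have "\<exists>j. P j" using ex unfolding P_def by blast
  then have "P (SOME j. P j)" by (rule someI_ex)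
  then obtain ubar gbar u g where mn: "is_minimizer a b L kper \<epsilon> kbar ubar gbar u g"
    and j: "(SOME j. P j) = (LINT x:D_set b L|lebesgue. (gbar x - 1)^2)" unfolding P_def by blast
  have "J1D a b L kper \<epsilon> kbar = (SOME j. P j)" unfolding J1D_def P_def ..
  also have "\<dots> = 2 * (L - b) * c" using j each[OF mn] by simp
  finally show ?thesis unfolding c_def .
qed

end

lemma m_over_k:
  assumes "k > 0" "Sx a b L kper k > 0" "b < L"
  shows "mval a b L kper k / k - 1 = (2 * b - Rf a b kper k) / (2 * (L - b) + Rf a b kper k)"
    "2 * (L - b) + Rf a b kper k > 0"
proof -
  have Z: "k * Sx a b L kper k = 2 * (L - b) + Rf a b kper k"
    unfolding Sx_def Rf_def using assms(1) by (simp add: field_simps)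
  show Zp: "2 * (L - b) + Rf a b kper k > 0" using Z assms by (metis mult_pos_pos)
  have "mval a b L kper k / k = 2 * L / (2 * (L - b) + Rf a b kper k)"
    unfolding mval_def Z[symmetric] using assms by (simp add: field_simps)
  then show "mval a b L kper k / k - 1 = (2 * b - Rf a b kper k) / (2 * (L - b) + Rf a b kper k)"
    using Zp by (simp add: field_simps)
qed

theorem mainTheorem4:
  fixes a b L \<epsilon> \<alpha> \<beta> :: real and kper :: "real \<Rightarrow> real"
  assumes geom: "0 < a" "a < b" "b < L"
    and eps: "0 < \<epsilon>" "\<exists>n::nat. 2 * a = real n * \<epsilon>" "\<exists>n::nat. b - a = real n * \<epsilon>"
    and kmeas: "kper \<in> borel_measurable lebesgue"
    and kperiodic: "\<forall>x. kper (x + 1) = kper x"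
    and kbounds: "0 < \<alpha>" "\<forall>x. \<alpha> \<le> kper x \<and> kper x \<le> \<beta>"
    and exists_min: "\<forall>kbar>0. \<exists>ubar gbar u g. is_minimizer a b L kper \<epsilon> kbar ubar gbar u g"
  shows
    "(\<forall>kbar>0. \<forall>ubar gbar u g. is_minimizer a b L kper \<epsilon> kbar ubar gbar u g \<longrightarrow>
        (\<exists>m. (AE x in lebesgue. x \<in> D_set b L \<longrightarrow> gbar x = m / kbar) \<and>
             measure lebesgue (D_set b L \<union> Dc_set a b \<union> Df_set a) =
               m * (measure lebesgue (D_set b L) / kbar
                    + measure lebesgue (Df_set a) / kstar kper
                    + measure lebesgue (Dc_set a b) * cell_avg (\<lambda>y. 2 / (kbar + kper y)))))
   \<and> (\<exists>kopt>0.
        (\<forall>kbar>0. kbar \<noteq> kopt \<longrightarrow> J1D a b L kper \<epsilon> kopt < J1D a b L kper \<epsilon> kbar) \<and>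
        measure lebesgue (Dc_set a b \<union> Df_set a) =
          measure lebesgue (Df_set a) * kopt / kstar kper
          + measure lebesgue (Dc_set a b) * kopt * cell_avg (\<lambda>y. 2 / (kopt + kper y)) \<and>
        (\<forall>k>0. measure lebesgue (Dc_set a b \<union> Df_set a) =
            measure lebesgue (Df_set a) * k / kstar kper
            + measure lebesgue (Dc_set a b) * k * cell_avg (\<lambda>y. 2 / (k + kper y)) \<longrightarrow> k = kopt) \<and>
        ((\<nexists>c. AE y in lebesgue. kper y = c) \<longrightarrow> kopt > kstar kper))"
proof -
  obtain n1 where n1: "2 * a = real n1 * \<epsilon>" using eps(2) by blast
  obtain n2 where n2: "b - a = real n2 * \<epsilon>" using eps(3) by blast
  note ctx0 = geom eps(1) n1 n2 kmeas kperiodic kbounds(1) kbounds(2)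
  note K3 = kmeas kbounds(1) kbounds(2)
  have ab: "0 < a" "a < b" using geom by auto
  have MF: "measure lebesgue (D_set b L) = 2 * (L - b)" "measure lebesgue (Df_set a) = 2 * a"
    "measure lebesgue (Dc_set a b) = 2 * (b - a)"
    "measure lebesgue (D_set b L \<union> Dc_set a b \<union> Df_set a) = 2 * L"
    "measure lebesgue (Dc_set a b \<union> Df_set a) = 2 * b" using meas_facts[OF geom] by auto
  have ks: "kstar kper = inverse (ci kper)" unfolding kstar_def ci_def ..
  have dks: "x / kstar kper = x * ci kper" for x unfolding ks by (simp add: divide_inverse)
  have Aeq: "cell_avg (\<lambda>y. 2 / (k + kper y)) = Aav kper k" for k unfolding Aav_def ..
  have Spos: "Sx a b L kper k > 0" if "k > 0" for k by (rule S_pos[OF ctx0 that])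
  have Rk: "measure lebesgue (Df_set a) * k / kstar kper
            + measure lebesgue (Dc_set a b) * k * cell_avg (\<lambda>y. 2 / (k + kper y)) = Rf a b kper k" for k
    unfolding MF dks Aeq Rf_def by (simp add: algebra_simps)
  show ?thesis
  proof (rule conjI)
    show "\<forall>kbar>0. \<forall>ubar gbar u g. is_minimizer a b L kper \<epsilon> kbar ubar gbar u g \<longrightarrow>
        (\<exists>m. (AE x in lebesgue. x \<in> D_set b L \<longrightarrow> gbar x = m / kbar) \<and>
             measure lebesgue (D_set b L \<union> Dc_set a b \<union> Df_set a) =
               m * (measure lebesgue (D_set b L) / kbar
                    + measure lebesgue (Df_set a) / kstar kper
                    + measure lebesgue (Dc_set a b) * cell_avg (\<lambda>y. 2 / (kbar + kper y))))"
    proof (intro allI impI)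
      fix kbar :: real and ubar gbar u g :: "real \<Rightarrow> real"
      assume kb0: "kbar > 0" and mn: "is_minimizer a b L kper \<epsilon> kbar ubar gbar u g"
      note ctx10 = ctx0 kb0
      show "\<exists>m. (AE x in lebesgue. x \<in> D_set b L \<longrightarrow> gbar x = m / kbar) \<and>
             measure lebesgue (D_set b L \<union> Dc_set a b \<union> Df_set a) =
               m * (measure lebesgue (D_set b L) / kbar
                    + measure lebesgue (Df_set a) / kstar kper
                    + measure lebesgue (Dc_set a b) * cell_avg (\<lambda>y. 2 / (kbar + kper y)))"
      proof (intro exI conjI)
        show "AE x in lebesgue. x \<in> D_set b L \<longrightarrow> gbar x = mval a b L kper kbar / kbar"
          by (rule part1[OF ctx10 mn])
        have "measure lebesgue (D_set b L) / kbar + measure lebesgue (Df_set a) / kstar kper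
              + measure lebesgue (Dc_set a b) * cell_avg (\<lambda>y. 2 / (kbar + kper y)) = Sx a b L kper kbar"
          unfolding MF dks Aeq Sx_def by (simp add: algebra_simps)
        then show "measure lebesgue (D_set b L \<union> Dc_set a b \<union> Df_set a) =
               mval a b L kper kbar * (measure lebesgue (D_set b L) / kbar
                    + measure lebesgue (Df_set a) / kstar kper
                    + measure lebesgue (Dc_set a b) * cell_avg (\<lambda>y. 2 / (kbar + kper y)))"
          using mS[OF ctx10] MF(4) by simp
      qed
    qed
  next
    obtain kopt where ko: "kopt > 0" "Rf a b kper kopt = 2 * b"
      using R_exists[OF K3 ab] by blast
    have strict: "Rf a b kper k < Rf a b kper k'" if "0 < k" "k < k'" for k k'
      by (rule R_mono[OF K3 ab that])
    have uniq: "k = kopt" if "k > 0" "Rf a b kper k = 2 * b" for k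
    proof (rule ccontr)
      assume "k \<noteq> kopt"
      then consider "k < kopt" | "kopt < k" by linarith
      then show False
      proof cases
        case 1 then show False using strict[OF that(1) 1] that ko by simp
      next
        case 2 then show False using strict[OF ko(1) 2] that ko by simp
      qed
    qed
    have Lb: "L - b > 0" using geom by simp
    have Jv: "J1D a b L kper \<epsilon> k = 2 * (L - b) * ((2 * b - Rf a b kper k) / (2 * (L - b) + Rf a b kper k))^2"
      if k: "k > 0" for k
    proof -
      have ex: "\<exists>ubar gbar u g. is_minimizer a b L kper \<epsilon> k ubar gbar u g" using exists_min k by blast
      show ?thesis using J1D_val[OF ctx0 k ex] m_over_k(1)[OF k Spos[OF k] geom(3)] by simp
    qed
    show "\<exists>kopt>0.
        (\<forall>kbar>0. kbar \<noteq> kopt \<longrightarrow> J1D a b L kper \<epsilon> kopt < J1D a b L kper \<epsilon> kbar) \<and>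
        measure lebesgue (Dc_set a b \<union> Df_set a) =
          measure lebesgue (Df_set a) * kopt / kstar kper
          + measure lebesgue (Dc_set a b) * kopt * cell_avg (\<lambda>y. 2 / (kopt + kper y)) \<and>
        (\<forall>k>0. measure lebesgue (Dc_set a b \<union> Df_set a) =
            measure lebesgue (Df_set a) * k / kstar kper
            + measure lebesgue (Dc_set a b) * k * cell_avg (\<lambda>y. 2 / (k + kper y)) \<longrightarrow> k = kopt) \<and>
        ((\<nexists>c. AE y in lebesgue. kper y = c) \<longrightarrow> kopt > kstar kper)"
    proof (intro exI conjI allI impI)
      show "kopt > 0" by (rule ko(1))
      fix kbar assume kb0: "kbar > 0" and ne: "kbar \<noteq> kopt"
      have J0: "J1D a b L kper \<epsilon> kopt = 0" using Jv[OF ko(1)] ko(2) by simp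
      have Rne: "Rf a b kper kbar \<noteq> 2 * b" using uniq[OF kb0] ne by blast
      have Zp: "2 * (L - b) + Rf a b kper kbar > 0" by (rule m_over_k(2)[OF kb0 Spos[OF kb0] geom(3)])
      have "(2 * b - Rf a b kper kbar) / (2 * (L - b) + Rf a b kper kbar) \<noteq> 0" using Rne Zp by simp
      then have "((2 * b - Rf a b kper kbar) / (2 * (L - b) + Rf a b kper kbar))^2 > 0" by simp
      then have "J1D a b L kper \<epsilon> kbar > 0" using Jv[OF kb0] Lb by simp
      then show "J1D a b L kper \<epsilon> kopt < J1D a b L kper \<epsilon> kbar" using J0 by simp
    next
      show "measure lebesgue (Dc_set a b \<union> Df_set a) =
          measure lebesgue (Df_set a) * kopt / kstar kper
          + measure lebesgue (Dc_set a b) * kopt * cell_avg (\<lambda>y. 2 / (kopt + kper y))"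
        unfolding Rk MF(5) ko(2) ..
    next
      fix k :: real assume k: "k > 0" and eq: "measure lebesgue (Dc_set a b \<union> Df_set a) =
            measure lebesgue (Df_set a) * k / kstar kper
            + measure lebesgue (Dc_set a b) * k * cell_avg (\<lambda>y. 2 / (k + kper y))"
      have "Rf a b kper k = 2 * b" using eq unfolding Rk MF(5) by simp
      then show "k = kopt" by (rule uniq[OF k])
    next
      assume nc: "\<nexists>c. AE y in lebesgue. kper y = c"
      have ksp: "kstar kper > 0" and ksc: "kstar kper * ci kper = 1"
        using ks_facts[OF K3 kperiodic] by auto
      have lt: "kstar kper * Aav kper (kstar kper) < 1" by (rule star_lt[OF K3 kperiodic nc])
      have "Rf a b kper (kstar kper) = 2 * a * (kstar kper * ci kper) + 2 * (b - a) * (kstar kper * Aav kper (kstar kper))"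
        unfolding Rf_def by (simp add: algebra_simps)
      also have "\<dots> < 2 * a + 2 * (b - a) * 1"
      proof -
        have "2 * (b - a) * (kstar kper * Aav kper (kstar kper)) < 2 * (b - a) * 1"
          by (rule mult_strict_left_mono[OF lt]) (use ab in simp)
        then show ?thesis using ksc by simp
      qed
      finally have Rs: "Rf a b kper (kstar kper) < 2 * b" by simp
      show "kopt > kstar kper"
      proof (rule ccontr)
        assume "\<not> kopt > kstar kper"
        then consider "kopt = kstar kper" | "kopt < kstar kper" by linarith
        then show False
        proof cases
          case 1 then show False using Rs ko by simp
        next
          case 2 then show False using strict[OF ko(1) 2] Rs ko by simp
        qed
      qed
    qed
  qed
qed


end
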